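(* Let a topological group $G$ act continuously on a space $X$ such that $X/G$ is connected. Suppose every $x\in X$ is contained in a constant slice $(S,\mathrm{Stab}_x(G))$. Then the conjugacy class of $\Gamma:=\mathrm{Stab}_x(G)$ is independent of $x$, and the comparison map $X/\!\!/G\to X/G$ is a fibre bundle with fibre $B\Gamma$.
   Context: For an action $G\curvearrowright X$, a pair $(S,\Gamma)$ with $S\subseteq X$ a subspace and $\Gamma\le G$ a subgroup is a slice if: (SL1) $g\cdot S\subseteq S$ for all $g\in\Gamma$; (SL2) if $g\cdot S\cap S\neq\emptyset$ then $g\in\Gamma$; (SL3) $G\to G/\Gamma$ is a principal $\Gamma$-bundle and there is a local section $\chi\colon U\to G$ defined on a neighbourhood $U$ of the identity coset such that $U\times S\to X$, $([u],s)\mapsto\chi([u])\cdot s$, is an open embedding. A slice is constant if $\Gamma$ acts trivially on $S$. $\mathrm{Stab}_x(G)=\{g\in G: g x=x\}$. The homotopy quotient is $X/\!\!/G:=(EG\times X)/G$ with diagonal action ($EG\to BG$ the universal principal $G$-bundle), and the comparison map $X/\!\!/G\to X/G$ is induced by projection to $X$. *)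

theory Defs
  imports "HOL-Analysis.Analysis" "HOL-Algebra.Coset"
begin

definition quotient_topology :: "'a topology \<Rightarrow> ('a \<Rightarrow> 'b) \<Rightarrow> 'b topology" where
  "quotient_topology X q =
     topology (\<lambda>U. U \<subseteq> q ` topspace X \<and> openin X {x \<in> topspace X. q x \<in> U})"

lemma istopology_quotient:
  "istopology (\<lambda>U. U \<subseteq> q ` topspace X \<and> openin X {x \<in> topspace X. q x \<in> U})"
proof -
  have 1: "\<And>S T. {x \<in> topspace X. q x \<in> S \<inter> T} = {x \<in> topspace X. q x \<in> S} \<inter> {x \<in> topspace X. q x \<in> T}"
    by auto
  have 2: "\<And>K. {x \<in> topspace X. q x \<in> \<Union>K} = (\<Union>S\<in>K. {x \<in> topspace X. q x \<in> S})"
    by auto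
  show ?thesis unfolding istopology_def
    by (auto simp only: 1 2 intro!: openin_Int openin_Union)
qed

definition topological_group :: "'g monoid \<Rightarrow> 'g topology \<Rightarrow> bool" where
  "topological_group G TG \<longleftrightarrow> group G \<and> topspace TG = carrier G \<and>
     continuous_map (prod_topology TG TG) TG (\<lambda>(a, b). a \<otimes>\<^bsub>G\<^esub> b) \<and>
     continuous_map TG TG (\<lambda>a. inv\<^bsub>G\<^esub> a)"

definition continuous_action ::
  "'g monoid \<Rightarrow> 'g topology \<Rightarrow> 'x topology \<Rightarrow> ('g \<Rightarrow> 'x \<Rightarrow> 'x) \<Rightarrow> bool" where
  "continuous_action G TG X act \<longleftrightarrow>
     topological_group G TG \<and>
     (\<forall>x\<in>topspace X. act \<one>\<^bsub>G\<^esub> x = x) \<and>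
     (\<forall>g\<in>carrier G. \<forall>h\<in>carrier G. \<forall>x\<in>topspace X. act (g \<otimes>\<^bsub>G\<^esub> h) x = act g (act h x)) \<and>
     continuous_map (prod_topology TG X) X (\<lambda>(g, x). act g x)"

definition orbit :: "'g monoid \<Rightarrow> ('g \<Rightarrow> 'x \<Rightarrow> 'x) \<Rightarrow> 'x \<Rightarrow> 'x set" where
  "orbit G act x = {act g x | g. g \<in> carrier G}"

definition orbit_space :: "'g monoid \<Rightarrow> 'x topology \<Rightarrow> ('g \<Rightarrow> 'x \<Rightarrow> 'x) \<Rightarrow> 'x set topology" where
  "orbit_space G X act = quotient_topology X (orbit G act)"

definition Stab :: "'g monoid \<Rightarrow> ('g \<Rightarrow> 'x \<Rightarrow> 'x) \<Rightarrow> 'x \<Rightarrow> 'g set" where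
  "Stab G act x = {g \<in> carrier G. act g x = x}"

abbreviation subgrp :: "'g monoid \<Rightarrow> 'g set \<Rightarrow> 'g monoid" where
  "subgrp G H \<equiv> G\<lparr>carrier := H\<rparr>"

definition principal_bundle ::
  "'g monoid \<Rightarrow> 'g topology \<Rightarrow> 'e topology \<Rightarrow> ('g \<Rightarrow> 'e \<Rightarrow> 'e) \<Rightarrow> 'b topology \<Rightarrow> ('e \<Rightarrow> 'b) \<Rightarrow> bool"
  where
  "principal_bundle G TG E a B p \<longleftrightarrow>
     continuous_action G TG E a \<and>
     continuous_map E B p \<and> p ` topspace E = topspace B \<and>
     (\<forall>g\<in>carrier G. \<forall>e\<in>topspace E. p (a g e) = p e) \<and>
     (\<forall>b\<in>topspace B. \<exists>U \<phi>. openin B U \<and> b \<in> U \<and>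
        homeomorphic_map (prod_topology (subtopology B U) TG)
                         (subtopology E {e \<in> topspace E. p e \<in> U}) \<phi> \<and>
        (\<forall>u\<in>U. \<forall>g\<in>carrier G. p (\<phi> (u, g)) = u \<and>
            (\<forall>h\<in>carrier G. \<phi> (u, h \<otimes>\<^bsub>G\<^esub> g) = a h (\<phi> (u, g)))))"

definition universal_bundle ::
  "'g monoid \<Rightarrow> 'g topology \<Rightarrow> 'e topology \<Rightarrow> ('g \<Rightarrow> 'e \<Rightarrow> 'e) \<Rightarrow> bool" where
  "universal_bundle G TG E a \<longleftrightarrow>
     topspace E \<noteq> {} \<and> contractible_space E \<and>
     principal_bundle G TG E a (orbit_space G E a) (orbit G a)"

definition classifying_space_model ::
  "'g monoid \<Rightarrow> 'g topology \<Rightarrow> 'g set \<Rightarrow> 'e set topology \<Rightarrow> bool" where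
  "classifying_space_model G TG \<Gamma> F \<longleftrightarrow>
     (\<exists>(E :: 'e topology) a. universal_bundle (subgrp G \<Gamma>) (subtopology TG \<Gamma>) E a \<and>
                             F = orbit_space (subgrp G \<Gamma>) E a)"

definition fibre_bundle :: "'y topology \<Rightarrow> 'b topology \<Rightarrow> ('y \<Rightarrow> 'b) \<Rightarrow> 'f topology \<Rightarrow> bool" where
  "fibre_bundle Y B p F \<longleftrightarrow>
     continuous_map Y B p \<and> p ` topspace Y = topspace B \<and>
     (\<forall>b\<in>topspace B. \<exists>U \<phi>. openin B U \<and> b \<in> U \<and>
        homeomorphic_map (subtopology Y {y \<in> topspace Y. p y \<in> U})
                         (prod_topology (subtopology B U) F) \<phi> \<and>
        (\<forall>y\<in>topspace Y. p y \<in> U \<longrightarrow> fst (\<phi> y) = p y))"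

definition coset_space :: "'g monoid \<Rightarrow> 'g topology \<Rightarrow> 'g set \<Rightarrow> 'g set topology" where
  "coset_space G TG \<Gamma> = quotient_topology TG (\<lambda>g. g <#\<^bsub>G\<^esub> \<Gamma>)"

definition slice ::
  "'g monoid \<Rightarrow> 'g topology \<Rightarrow> 'x topology \<Rightarrow> ('g \<Rightarrow> 'x \<Rightarrow> 'x) \<Rightarrow> 'x set \<Rightarrow> 'g set \<Rightarrow> bool" where
  "slice G TG X act S \<Gamma> \<longleftrightarrow>
     S \<subseteq> topspace X \<and> subgroup \<Gamma> G \<and>
     \<comment> \<open>SL1\<close>
     (\<forall>g\<in>\<Gamma>. act g ` S \<subseteq> S) \<and>
     \<comment> \<open>SL2\<close>
     (\<forall>g\<in>carrier G. act g ` S \<inter> S \<noteq> {} \<longrightarrow> g \<in> \<Gamma>) \<and>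
     \<comment> \<open>SL3: G \<rightarrow> G/\<Gamma> is a principal \<Gamma>-bundle (\<Gamma> acting by right multiplication),
        and there is a local section sec near the identity coset giving an open embedding\<close>
     principal_bundle (subgrp G \<Gamma>) (subtopology TG \<Gamma>) TG (\<lambda>h g. g \<otimes>\<^bsub>G\<^esub> inv\<^bsub>G\<^esub> h)
        (coset_space G TG \<Gamma>) (\<lambda>g. g <#\<^bsub>G\<^esub> \<Gamma>) \<and>
     (\<exists>U sec. openin (coset_space G TG \<Gamma>) U \<and> \<Gamma> \<in> U \<and>
        continuous_map (subtopology (coset_space G TG \<Gamma>) U) TG sec \<and>
        (\<forall>c\<in>U. sec c <#\<^bsub>G\<^esub> \<Gamma> = c) \<and>
        embedding_map (prod_topology (subtopology (coset_space G TG \<Gamma>) U) (subtopology X S)) X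
                      (\<lambda>(c, s). act (sec c) s) \<and>
        open_map (prod_topology (subtopology (coset_space G TG \<Gamma>) U) (subtopology X S)) X
                 (\<lambda>(c, s). act (sec c) s))"

definition constant_slice ::
  "'g monoid \<Rightarrow> 'g topology \<Rightarrow> 'x topology \<Rightarrow> ('g \<Rightarrow> 'x \<Rightarrow> 'x) \<Rightarrow> 'x set \<Rightarrow> 'g set \<Rightarrow> bool" where
  "constant_slice G TG X act S \<Gamma> \<longleftrightarrow>
     slice G TG X act S \<Gamma> \<and> (\<forall>g\<in>\<Gamma>. \<forall>s\<in>S. act g s = s)"

definition diag_action :: "('g \<Rightarrow> 'e \<Rightarrow> 'e) \<Rightarrow> ('g \<Rightarrow> 'x \<Rightarrow> 'x) \<Rightarrow> 'g \<Rightarrow> 'e \<times> 'x \<Rightarrow> 'e \<times> 'x" where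
  "diag_action aE act g = (\<lambda>(e, x). (aE g e, act g x))"

definition homotopy_quotient ::
  "'g monoid \<Rightarrow> 'e topology \<Rightarrow> ('g \<Rightarrow> 'e \<Rightarrow> 'e) \<Rightarrow> 'x topology \<Rightarrow> ('g \<Rightarrow> 'x \<Rightarrow> 'x)
     \<Rightarrow> ('e \<times> 'x) set topology" where
  "homotopy_quotient G EG aE X act = orbit_space G (prod_topology EG X) (diag_action aE act)"

text \<open>The comparison map X//G \<rightarrow> X/G induced by the projection EG \<times> X \<rightarrow> X:
  the G-orbit of (e,x) is sent to snd ` (its orbit) = the G-orbit of x.\<close>

definition comparison_map :: "('e \<times> 'x) set \<Rightarrow> 'x set" where
  "comparison_map C = snd ` C"

end

theory Submission
  imports Defs
begin

section \<open>Generic topology\<close>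

lemma openin_quotient_topology:
  "openin (quotient_topology X q) U \<longleftrightarrow> U \<subseteq> q ` topspace X \<and> openin X {x \<in> topspace X. q x \<in> U}"
  unfolding quotient_topology_def using istopology_quotient[of q X] by simp

lemma topspace_quotient_topology:
  "topspace (quotient_topology X q) = q ` topspace X"
proof
  have "{x \<in> topspace X. q x \<in> q ` topspace X} = topspace X" by auto
  then have "openin (quotient_topology X q) (q ` topspace X)"
    by (simp add: openin_quotient_topology)
  then show "q ` topspace X \<subseteq> topspace (quotient_topology X q)"
    by (rule openin_subset)
  show "topspace (quotient_topology X q) \<subseteq> q ` topspace X"
    using openin_topspace[of "quotient_topology X q"] unfolding openin_quotient_topology by blast
qed

lemma continuous_map_quotient:
  "continuous_map X (quotient_topology X q) q"
  unfolding continuous_map_def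
  by (auto simp: topspace_quotient_topology openin_quotient_topology)

lemma quotient_continuous_on_open:
  assumes Ob: "openin X Ob" and sat: "\<And>x. x \<in> topspace X \<Longrightarrow> q x \<in> q ` Ob \<Longrightarrow> x \<in> Ob"
    and f: "continuous_map (subtopology X Ob) Z (\<lambda>x. f (q x))"
  shows "continuous_map (subtopology (quotient_topology X q) (q ` Ob)) Z f"
proof -
  have Osub: "Ob \<subseteq> topspace X" using Ob by (rule openin_subset)
  have pre: "{x \<in> topspace X. q x \<in> q ` Ob} = Ob" using sat Osub by auto
  have qO: "openin (quotient_topology X q) (q ` Ob)"
    unfolding openin_quotient_topology pre using Ob Osub by auto
  have ts: "topspace (subtopology (quotient_topology X q) (q ` Ob)) = q ` Ob"
    using openin_subset[OF qO] by auto
  show ?thesis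
    unfolding continuous_map_def
  proof (intro conjI allI impI)
    show "f \<in> topspace (subtopology (quotient_topology X q) (q ` Ob)) \<rightarrow> topspace Z"
    proof
      fix y assume "y \<in> topspace (subtopology (quotient_topology X q) (q ` Ob))"
      then obtain x where x: "x \<in> Ob" "y = q x" unfolding ts by blast
      have "(\<lambda>x. f (q x)) ` topspace (subtopology X Ob) \<subseteq> topspace Z"
        using f by (rule continuous_map_image_subset_topspace)
      then show "f y \<in> topspace Z" using x Osub by auto
    qed
  next
    fix W assume W: "openin Z W"
    have "openin (subtopology X Ob) {x \<in> topspace (subtopology X Ob). f (q x) \<in> W}"
      using f W by (rule openin_continuous_map_preimage)
    then have o1: "openin X {x \<in> Ob. f (q x) \<in> W}"
      using Ob Osub by (simp add: openin_open_subtopology Int_absorb1)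
    have "{x \<in> topspace X. q x \<in> {y \<in> q ` Ob. f y \<in> W}} = {x \<in> Ob. f (q x) \<in> W}"
      using sat Osub by auto
    then have "openin (quotient_topology X q) {y \<in> q ` Ob. f y \<in> W}"
      unfolding openin_quotient_topology using o1 Osub by auto
    then show "openin (subtopology (quotient_topology X q) (q ` Ob))
              {x \<in> topspace (subtopology (quotient_topology X q) (q ` Ob)). f x \<in> W}"
      unfolding ts using qO openin_open_subtopology by blast
  qed
qed

lemma continuous_map_locally:
  assumes "\<And>x. x \<in> topspace X \<Longrightarrow> \<exists>T. openin X T \<and> x \<in> T \<and> continuous_map (subtopology X T) Y f"
  shows "continuous_map X Y f"
proof -
  define T where "T x = (SOME T. openin X T \<and> x \<in> T \<and> continuous_map (subtopology X T) Y f)" for x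
  have T: "openin X (T x) \<and> x \<in> T x \<and> continuous_map (subtopology X (T x)) Y f" if "x \<in> topspace X" for x
    unfolding T_def by (rule someI_ex) (use assms that in blast)
  show ?thesis
    apply (rule pasting_lemma[where I="topspace X" and T=T and f="\<lambda>_. f"])
    using T by blast+
qed

lemma open_map_prod_right:
  assumes "open_map X Q q"
  shows "open_map (prod_topology Z X) (prod_topology Z Q) (\<lambda>(z,x). (z, q x))"
  unfolding open_map_def
proof (intro allI impI)
  fix A assume A: "openin (prod_topology Z X) A"
  show "openin (prod_topology Z Q) ((\<lambda>(z,x). (z, q x)) ` A)"
    unfolding openin_prod_topology_alt
  proof (intro allI impI)
    fix z y assume "(z, y) \<in> (\<lambda>(z,x). (z, q x)) ` A"
    then obtain p where p: "p \<in> A" "(z, y) = (\<lambda>(z,x). (z, q x)) p" by blast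
    obtain x where zx: "(z, x) \<in> A" and y: "y = q x" using p by (cases p) simp
    have "\<forall>x y. (x,y) \<in> A \<longrightarrow> (\<exists>U V. openin Z U \<and> openin X V \<and> x \<in> U \<and> y \<in> V \<and> U \<times> V \<subseteq> A)"
      using A by (simp only: openin_prod_topology_alt)
    from this[rule_format, OF zx] obtain U V where "openin Z U" "openin X V" "z \<in> U" "x \<in> V" "U \<times> V \<subseteq> A"
      by blast
    then have UV: "openin Z U" "openin X V" "z \<in> U" "x \<in> V" "U \<times> V \<subseteq> A" by auto
    have qV: "openin Q (q ` V)" using assms UV(2) unfolding open_map_def by blast
    have sub: "U \<times> q ` V \<subseteq> (\<lambda>(z,x). (z, q x)) ` A"
    proof
      fix p assume "p \<in> U \<times> q ` V"
      then obtain a x' where ax: "a \<in> U" "x' \<in> V" "p = (a, q x')" by blast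
      have "(a, x') \<in> A" using ax UV(5) by blast
      then show "p \<in> (\<lambda>(z,x). (z, q x)) ` A" using ax(3) by (auto intro!: image_eqI[of _ _ "(a,x')"])
    qed
    show "\<exists>U V. openin Z U \<and> openin Q V \<and> z \<in> U \<and> y \<in> V \<and> U \<times> V \<subseteq> (\<lambda>(z,x). (z, q x)) ` A"
      apply (rule exI[of _ U], rule exI[of _ "q ` V"])
      using UV qV sub y by simp
  qed
qed

lemma continuous_map_prod_quotient:
  assumes om: "open_map X Q q" and sur: "q ` topspace X = topspace Q"
    and h: "continuous_map (prod_topology Z X) W (\<lambda>(z,x). h (z, q x))"
  shows "continuous_map (prod_topology Z Q) W h"
  unfolding continuous_map_def
proof (intro conjI allI impI)
  let ?m = "\<lambda>(z,x). (z, q x)"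
  have surm: "?m ` topspace (prod_topology Z X) = topspace (prod_topology Z Q)"
  proof
    show "?m ` topspace (prod_topology Z X) \<subseteq> topspace (prod_topology Z Q)"
      using sur by (auto simp: topspace_prod_topology)
    show "topspace (prod_topology Z Q) \<subseteq> ?m ` topspace (prod_topology Z X)"
    proof
      fix p assume "p \<in> topspace (prod_topology Z Q)"
      then obtain z y where zy: "z \<in> topspace Z" "y \<in> topspace Q" "p = (z, y)"
        unfolding topspace_prod_topology by blast
      then obtain x where x: "x \<in> topspace X" "y = q x"
        using sur by blast
      then show "p \<in> ?m ` topspace (prod_topology Z X)"
        using zy by (auto simp: topspace_prod_topology intro!: image_eqI[of _ _ "(z,x)"])
    qed
  qed
  show "h \<in> topspace (prod_topology Z Q) \<rightarrow> topspace W"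
  proof
    fix p assume "p \<in> topspace (prod_topology Z Q)"
    then obtain z y where zy: "z \<in> topspace Z" "y \<in> topspace Q" "p = (z, y)"
      unfolding topspace_prod_topology by blast
    then obtain x where x: "x \<in> topspace X" "y = q x"
      using sur by blast
    have "(\<lambda>(z,x). h (z, q x)) ` topspace (prod_topology Z X) \<subseteq> topspace W"
      using h by (rule continuous_map_image_subset_topspace)
    moreover have "(z, x) \<in> topspace (prod_topology Z X)" using zy x by (simp add: topspace_prod_topology)
    ultimately have "(\<lambda>(z,x). h (z, q x)) (z, x) \<in> topspace W" by (rule subsetD[OF _ imageI])
    then show "h p \<in> topspace W" using zy x by simp
  qed
  fix V assume V: "openin W V"
  have "openin (prod_topology Z X) {p \<in> topspace (prod_topology Z X). h (?m p) \<in> V}"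
    using openin_continuous_map_preimage[OF h V] by (simp add: case_prod_unfold)
  then have "openin (prod_topology Z Q) (?m ` {p \<in> topspace (prod_topology Z X). h (?m p) \<in> V})"
    using open_map_prod_right[OF om] unfolding open_map_def by blast
  moreover have "?m ` {p \<in> topspace (prod_topology Z X). h (?m p) \<in> V} = {p \<in> topspace (prod_topology Z Q). h p \<in> V}"
  proof
    show "?m ` {p \<in> topspace (prod_topology Z X). h (?m p) \<in> V} \<subseteq> {p \<in> topspace (prod_topology Z Q). h p \<in> V}"
    proof
      fix w assume "w \<in> ?m ` {p \<in> topspace (prod_topology Z X). h (?m p) \<in> V}"
      then obtain p where p: "p \<in> topspace (prod_topology Z X)" "h (?m p) \<in> V" "w = ?m p" by blast
      have "w \<in> topspace (prod_topology Z Q)" unfolding p(3) surm[symmetric] using p(1) by (rule imageI)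
      then show "w \<in> {p \<in> topspace (prod_topology Z Q). h p \<in> V}" using p by simp
    qed
    show "{p \<in> topspace (prod_topology Z Q). h p \<in> V} \<subseteq> ?m ` {p \<in> topspace (prod_topology Z X). h (?m p) \<in> V}"
    proof
      fix w assume w: "w \<in> {p \<in> topspace (prod_topology Z Q). h p \<in> V}"
      then have "w \<in> ?m ` topspace (prod_topology Z X)" using surm by simp
      then obtain p where p: "p \<in> topspace (prod_topology Z X)" "w = ?m p" by (rule imageE)
      then show "w \<in> ?m ` {p \<in> topspace (prod_topology Z X). h (?m p) \<in> V}" using w by simp
    qed
  qed
  ultimately show "openin (prod_topology Z Q) {p \<in> topspace (prod_topology Z Q). h p \<in> V}" by simp
qed

context group
begin

lemma conj_closed: "g \<in> carrier G \<Longrightarrow> h \<in> carrier G \<Longrightarrow> g \<otimes> h \<otimes> inv g \<in> carrier G"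
  by simp

lemma conj_comp:
  assumes "g \<in> carrier G" "k \<in> carrier G" "H \<subseteq> carrier G"
  shows "(\<lambda>h. g \<otimes> h \<otimes> inv g) ` ((\<lambda>h. k \<otimes> h \<otimes> inv k) ` H) = (\<lambda>h. (g \<otimes> k) \<otimes> h \<otimes> inv (g \<otimes> k)) ` H"
proof -
  have "g \<otimes> (k \<otimes> h \<otimes> inv k) \<otimes> inv g = (g \<otimes> k) \<otimes> h \<otimes> inv (g \<otimes> k)" if "h \<in> H" for h
    using assms that by (auto simp: inv_mult_group m_assoc)
  then show ?thesis by (auto simp: image_image image_iff)
qed

lemma conj_inv_cancel:
  assumes "g \<in> carrier G" "H \<subseteq> carrier G"
  shows "(\<lambda>h. inv g \<otimes> h \<otimes> inv (inv g)) ` ((\<lambda>h. g \<otimes> h \<otimes> inv g) ` H) = H"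
proof -
  have "inv g \<otimes> (g \<otimes> h \<otimes> inv g) \<otimes> inv (inv g) = h" if "h \<in> H" for h
    using assms that subsetD[OF assms(2) that] by (simp add: m_assoc[symmetric]) (simp add: m_assoc)
  then show ?thesis by (auto simp: image_image)
qed

lemma conj_one: "H \<subseteq> carrier G \<Longrightarrow> (\<lambda>h. \<one> \<otimes> h \<otimes> inv \<one>) ` H = H"
  by (auto simp: image_iff subsetD)

lemma l_coset_eq_iff:
  assumes "subgroup H G" "a \<in> carrier G" "b \<in> carrier G"
  shows "a <# H = b <# H \<longleftrightarrow> inv a \<otimes> b \<in> H"
proof
  assume eq: "a <# H = b <# H"
  have "b \<in> b <# H" using assms unfolding l_coset_def
    by (auto intro!: bexI[of _ \<one>] subgroup.one_closed)
  then obtain h where h: "h \<in> H" "b = a \<otimes> h" using eq unfolding l_coset_def by auto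
  then have "h \<in> carrier G" using assms subgroup.subset by blast
  then show "inv a \<otimes> b \<in> H" using h assms by (simp add: m_assoc[symmetric])
next
  assume h: "inv a \<otimes> b \<in> H"
  have Hc: "H \<subseteq> carrier G" using assms subgroup.subset by blast
  show "a <# H = b <# H"
  proof -
    have b: "b = a \<otimes> (inv a \<otimes> b)" using assms by (simp add: m_assoc[symmetric])
    have "b <# H = a <# ((inv a \<otimes> b) <# H)"
      using assms Hc by (subst b) (simp add: lcos_m_assoc)
    also have "(inv a \<otimes> b) <# H = H" using assms h by (simp add: coset_join3)
    finally show ?thesis by simp
  qed
qed

end

section \<open>Continuous actions\<close>

locale cact =
  fixes G (structure) and TG :: "'g topology" and X :: "'x topology" and act :: "'g \<Rightarrow> 'x \<Rightarrow> 'x"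
  assumes ca: "continuous_action G TG X act"
begin

lemma tg: "topological_group G TG" using ca unfolding continuous_action_def by blast

lemma grp: "group G" using tg unfolding topological_group_def by blast

sublocale group G by (rule grp)

lemma top_G: "topspace TG = carrier G" using tg unfolding topological_group_def by blast

lemma act_one: "x \<in> topspace X \<Longrightarrow> act \<one> x = x"
  using ca unfolding continuous_action_def by blast

lemma act_mult: "g \<in> carrier G \<Longrightarrow> h \<in> carrier G \<Longrightarrow> x \<in> topspace X \<Longrightarrow> act (g \<otimes> h) x = act g (act h x)"
  using ca unfolding continuous_action_def by blast

lemma cont: "continuous_map (prod_topology TG X) X (\<lambda>(g, x). act g x)"
  using ca unfolding continuous_action_def by blast

lemma cont_pair:
  assumes "continuous_map Z TG a" "continuous_map Z X b"
  shows "continuous_map Z X (\<lambda>z. act (a z) (b z))"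
proof -
  have "continuous_map Z (prod_topology TG X) (\<lambda>z. (a z, b z))"
    using assms by (rule continuous_map_pairedI)
  from continuous_map_compose[OF this cont] show ?thesis by (simp add: o_def)
qed

lemma cont_act: assumes "g \<in> carrier G" shows "continuous_map X X (act g)"
proof -
  have c1: "continuous_map X TG (\<lambda>_. g)" using assms top_G by (simp add: continuous_map_const)
  have c2: "continuous_map X X (\<lambda>x. x)" using continuous_map_id[unfolded id_def] .
  show ?thesis using cont_pair[OF c1 c2] by simp
qed

lemma act_in: "g \<in> carrier G \<Longrightarrow> x \<in> topspace X \<Longrightarrow> act g x \<in> topspace X"
  using continuous_map_image_subset_topspace[OF cont_act[of g]] by blast

lemma act_inv1: "g \<in> carrier G \<Longrightarrow> x \<in> topspace X \<Longrightarrow> act (inv g) (act g x) = x"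
  using act_mult[of "inv g" g x] act_one by simp

lemma act_inv2: "g \<in> carrier G \<Longrightarrow> x \<in> topspace X \<Longrightarrow> act g (act (inv g) x) = x"
  using act_mult[of g "inv g" x] act_one by simp

lemma homeo_act: "g \<in> carrier G \<Longrightarrow> homeomorphic_maps X X (act g) (act (inv g))"
  unfolding homeomorphic_maps_def using cont_act act_inv1 act_inv2 by simp

lemma open_act: "g \<in> carrier G \<Longrightarrow> openin X V \<Longrightarrow> openin X (act g ` V)"
proof -
  assume g: "g \<in> carrier G" and V: "openin X V"
  have "open_map X X (act g)"
    by (rule homeomorphic_imp_open_map, rule homeomorphic_maps_imp_map, rule homeo_act[OF g])
  then show ?thesis using V unfolding open_map_def by blast
qed

lemma act_eq_iff: "g \<in> carrier G \<Longrightarrow> x \<in> topspace X \<Longrightarrow> y \<in> topspace X \<Longrightarrow> act g x = y \<longleftrightarrow> x = act (inv g) y"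
proof
  assume "g \<in> carrier G" "x \<in> topspace X" "y \<in> topspace X" "act g x = y"
  then show "x = act (inv g) y" using act_inv1[of g x] by simp
next
  assume "g \<in> carrier G" "x \<in> topspace X" "y \<in> topspace X" "x = act (inv g) y"
  then show "act g x = y" using act_inv2[of g y] by simp
qed

lemma orbit_def': "orbit G act x = (\<lambda>g. act g x) ` carrier G"
  unfolding orbit_def by auto

lemma in_orbit: "x \<in> topspace X \<Longrightarrow> x \<in> orbit G act x"
  unfolding orbit_def using act_one by (auto intro!: exI[of _ \<one>])

lemma orbit_act: assumes "g \<in> carrier G" "x \<in> topspace X" shows "orbit G act (act g x) = orbit G act x"
proof
  show "orbit G act (act g x) \<subseteq> orbit G act x"
  proof
    fix y assume "y \<in> orbit G act (act g x)"
    then obtain h where h: "h \<in> carrier G" "y = act h (act g x)" unfolding orbit_def by auto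
    then have "y = act (h \<otimes> g) x" using act_mult assms by simp
    moreover have "h \<otimes> g \<in> carrier G" using h assms by simp
    ultimately show "y \<in> orbit G act x" unfolding orbit_def by blast
  qed
  show "orbit G act x \<subseteq> orbit G act (act g x)"
  proof
    fix y assume "y \<in> orbit G act x"
    then obtain h where h: "h \<in> carrier G" "y = act h x" unfolding orbit_def by auto
    then have "y = act (h \<otimes> inv g) (act g x)" using assms by (simp add: act_mult act_in act_inv1)
    moreover have "h \<otimes> inv g \<in> carrier G" using h assms by simp
    ultimately show "y \<in> orbit G act (act g x)" unfolding orbit_def by blast
  qed
qed

lemma orbit_eq_iff:
  assumes "x \<in> topspace X" "y \<in> topspace X"
  shows "orbit G act x = orbit G act y \<longleftrightarrow> (\<exists>g\<in>carrier G. y = act g x)"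
proof
  assume "orbit G act x = orbit G act y"
  then have "y \<in> orbit G act x" using in_orbit assms by simp
  then show "\<exists>g\<in>carrier G. y = act g x" unfolding orbit_def by auto
next
  assume "\<exists>g\<in>carrier G. y = act g x"
  then show "orbit G act x = orbit G act y" using orbit_act assms by auto
qed

lemma mem_orbit_iff: "x \<in> topspace X \<Longrightarrow> y \<in> orbit G act x \<longleftrightarrow> (\<exists>g\<in>carrier G. y = act g x)"
  unfolding orbit_def by auto

lemma topspace_orbit_space: "topspace (orbit_space G X act) = orbit G act ` topspace X"
  unfolding orbit_space_def by (rule topspace_quotient_topology)

lemma openin_orbit_space:
  "openin (orbit_space G X act) U \<longleftrightarrow> U \<subseteq> orbit G act ` topspace X \<and> openin X {x \<in> topspace X. orbit G act x \<in> U}"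
  unfolding orbit_space_def by (rule openin_quotient_topology)

lemma cont_orbit: "continuous_map X (orbit_space G X act) (orbit G act)"
  unfolding orbit_space_def by (rule continuous_map_quotient)

lemma saturate_eq:
  assumes "V \<subseteq> topspace X"
  shows "{x \<in> topspace X. orbit G act x \<in> orbit G act ` V} = (\<Union>g\<in>carrier G. act g ` V)"
proof
  show "{x \<in> topspace X. orbit G act x \<in> orbit G act ` V} \<subseteq> (\<Union>g\<in>carrier G. act g ` V)"
  proof
    fix x assume "x \<in> {x \<in> topspace X. orbit G act x \<in> orbit G act ` V}"
    then obtain v where v: "v \<in> V" "x \<in> topspace X" "orbit G act x = orbit G act v" by auto
    then obtain g where "g \<in> carrier G" "x = act g v" using orbit_eq_iff[of v x] assms by auto
    then show "x \<in> (\<Union>g\<in>carrier G. act g ` V)" using v by auto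
  qed
  show "(\<Union>g\<in>carrier G. act g ` V) \<subseteq> {x \<in> topspace X. orbit G act x \<in> orbit G act ` V}"
  proof
    fix x assume "x \<in> (\<Union>g\<in>carrier G. act g ` V)"
    then obtain g v where gv: "g \<in> carrier G" "v \<in> V" "x = act g v" by auto
    then have "v \<in> topspace X" using assms by auto
    then show "x \<in> {x \<in> topspace X. orbit G act x \<in> orbit G act ` V}"
      using gv act_in orbit_act by auto
  qed
qed

lemma open_orbit_image: assumes "openin X V" shows "openin (orbit_space G X act) (orbit G act ` V)"
  unfolding openin_orbit_space
proof
  have V: "V \<subseteq> topspace X" using assms by (rule openin_subset)
  then show "orbit G act ` V \<subseteq> orbit G act ` topspace X" by auto
  show "openin X {x \<in> topspace X. orbit G act x \<in> orbit G act ` V}"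
    unfolding saturate_eq[OF V] using open_act assms by auto
qed

lemma open_map_orbit: "open_map X (orbit_space G X act) (orbit G act)"
  unfolding open_map_def using open_orbit_image by blast

lemma Stab_sub: "Stab G act x \<subseteq> carrier G" unfolding Stab_def by auto

lemma Stab_subgroup: assumes "x \<in> topspace X" shows "subgroup (Stab G act x) G"
proof
  show "Stab G act x \<subseteq> carrier G" by (rule Stab_sub)
  show "\<one> \<in> Stab G act x" unfolding Stab_def using act_one assms by auto
  fix g h assume "g \<in> Stab G act x" "h \<in> Stab G act x"
  then show "g \<otimes> h \<in> Stab G act x" unfolding Stab_def using act_mult assms by auto
next
  fix g assume "g \<in> Stab G act x"
  then show "inv g \<in> Stab G act x" unfolding Stab_def using act_inv1[of g x] assms by auto
qed

lemma Stab_act: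
  assumes g: "g \<in> carrier G" and x: "x \<in> topspace X"
  shows "Stab G act (act g x) = (\<lambda>h. g \<otimes> h \<otimes> inv g) ` Stab G act x"
proof
  show "Stab G act (act g x) \<subseteq> (\<lambda>h. g \<otimes> h \<otimes> inv g) ` Stab G act x"
  proof
    fix k assume k: "k \<in> Stab G act (act g x)"
    then have kc: "k \<in> carrier G" and kx: "act k (act g x) = act g x" unfolding Stab_def by auto
    have "act (inv g \<otimes> k \<otimes> g) x = act (inv g) (act k (act g x))"
      using g x kc act_mult act_in by simp
    also have "\<dots> = x" using kx act_inv1 g x by simp
    finally have "inv g \<otimes> k \<otimes> g \<in> Stab G act x" unfolding Stab_def using g kc by simp
    moreover have "k = g \<otimes> (inv g \<otimes> k \<otimes> g) \<otimes> inv g"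
      using g kc by (simp add: m_assoc[symmetric]) (simp add: m_assoc)
    ultimately show "k \<in> (\<lambda>h. g \<otimes> h \<otimes> inv g) ` Stab G act x" by (rule rev_image_eqI)
  qed
  show "(\<lambda>h. g \<otimes> h \<otimes> inv g) ` Stab G act x \<subseteq> Stab G act (act g x)"
  proof
    fix k assume "k \<in> (\<lambda>h. g \<otimes> h \<otimes> inv g) ` Stab G act x"
    then obtain h where h: "h \<in> carrier G" "act h x = x" "k = g \<otimes> h \<otimes> inv g" unfolding Stab_def by auto
    have "act k (act g x) = act g (act h (act (inv g) (act g x)))"
      using g h x act_mult act_in by simp
    also have "\<dots> = act g x" using act_inv1 g x h by simp
    finally show "k \<in> Stab G act (act g x)" unfolding Stab_def using g h by simp
  qed
qed

end

lemma cm_fst: "continuous_map Z (prod_topology X Y) f \<Longrightarrow> continuous_map Z X (\<lambda>z. fst (f z))"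
  using continuous_map_fst_of[of Z X Y f] by (simp add: o_def)

lemma cm_snd: "continuous_map Z (prod_topology X Y) f \<Longrightarrow> continuous_map Z Y (\<lambda>z. snd (f z))"
  using continuous_map_snd_of[of Z X Y f] by (simp add: o_def)

lemma cm_comp: "continuous_map Z X f \<Longrightarrow> continuous_map X Y g \<Longrightarrow> continuous_map Z Y (\<lambda>z. g (f z))"
  using continuous_map_compose[of Z X f Y g] by (simp add: o_def)

context cact
begin

lemma cont_mult: "continuous_map (prod_topology TG TG) TG (\<lambda>(a, b). a \<otimes> b)"
  using tg unfolding topological_group_def by blast

lemma cont_inv: "continuous_map TG TG (\<lambda>a. inv a)"
  using tg unfolding topological_group_def by blast

lemma cont_mult_pair:
  assumes "continuous_map Z TG a" "continuous_map Z TG b"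
  shows "continuous_map Z TG (\<lambda>z. a z \<otimes> b z)"
proof -
  have "continuous_map Z (prod_topology TG TG) (\<lambda>z. (a z, b z))"
    using assms by (rule continuous_map_pairedI)
  from continuous_map_compose[OF this cont_mult] show ?thesis by (simp add: o_def)
qed

lemma cont_inv_of:
  assumes "continuous_map Z TG a"
  shows "continuous_map Z TG (\<lambda>z. inv (a z))"
  using continuous_map_compose[OF assms cont_inv] by (simp add: o_def)

lemma cact_subgroup:
  assumes H: "subgroup H G"
  shows "cact (subgrp G H) (subtopology TG H) X act"
proof -
  have Hc: "H \<subseteq> carrier G" using H by (rule subgroup.subset)
  have grpH: "group (subgrp G H)" using H by (rule subgroup.subgroup_is_group) (rule grp)
  have tsH: "topspace (subtopology TG H) = H" using Hc top_G by auto
  have pr: "prod_topology (subtopology TG H) (subtopology TG H) = subtopology (prod_topology TG TG) (H \<times> H)"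
    by (simp add: subtopology_Times)
  have cm: "continuous_map (prod_topology (subtopology TG H) (subtopology TG H)) (subtopology TG H)
              (\<lambda>(a, b). a \<otimes>\<^bsub>subgrp G H\<^esub> b)"
    unfolding pr continuous_map_in_subtopology
  proof
    show "continuous_map (subtopology (prod_topology TG TG) (H \<times> H)) TG (\<lambda>(a, b). a \<otimes>\<^bsub>subgrp G H\<^esub> b)"
      using continuous_map_from_subtopology[OF cont_mult] by simp
    show "(\<lambda>(a, b). a \<otimes>\<^bsub>subgrp G H\<^esub> b) \<in> topspace (subtopology (prod_topology TG TG) (H \<times> H)) \<rightarrow> H"
      using H by (auto simp: subgroup.m_closed)
  qed
  have ci: "continuous_map (subtopology TG H) (subtopology TG H) (\<lambda>a. inv\<^bsub>subgrp G H\<^esub> a)"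
  proof (rule continuous_map_eq)
    show "continuous_map (subtopology TG H) (subtopology TG H) (\<lambda>a. inv a)"
      unfolding continuous_map_in_subtopology
      using continuous_map_from_subtopology[OF cont_inv] H tsH by (auto simp: subgroup.m_inv_closed)
    show "\<And>x. x \<in> topspace (subtopology TG H) \<Longrightarrow> inv x = inv\<^bsub>subgrp G H\<^esub> x"
      using H tsH by simp
  qed
  have ctg: "topological_group (subgrp G H) (subtopology TG H)"
    unfolding topological_group_def using grpH tsH cm ci by simp
  have cc: "continuous_map (prod_topology (subtopology TG H) X) X (\<lambda>(g, x). act g x)"
  proof -
    have "prod_topology (subtopology TG H) X = subtopology (prod_topology TG X) (H \<times> topspace X)"
      by (simp add: subtopology_Times)
    then show ?thesis using continuous_map_from_subtopology[OF cont] by simp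
  qed
  show ?thesis
    unfolding cact_def continuous_action_def
    using ctg cc act_one act_mult Hc by (auto intro!: act_mult dest: subsetD[OF Hc])
qed

end

section \<open>Restricting a universal bundle to a subgroup\<close>

locale restr = E: cact G TG EG aE
  for G (structure) and TG :: "'g topology" and EG :: "'e topology" and aE +
  fixes \<Gamma> :: "'g set" and U1 :: "'e set set" and \<phi>1 :: "'e set \<times> 'g \<Rightarrow> 'e" and \<phi>1'
    and V :: "'g set set" and \<psi> :: "'g set \<times> 'g \<Rightarrow> 'g" and \<psi>'
  assumes sub: "subgroup \<Gamma> G"
  and U1: "openin (orbit_space G EG aE) U1"
  and h\<phi>1: "homeomorphic_maps (prod_topology (subtopology (orbit_space G EG aE) U1) TG)
              (subtopology EG {e \<in> topspace EG. orbit G aE e \<in> U1}) \<phi>1 \<phi>1'"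
  and eq\<phi>1: "\<And>u g. u \<in> U1 \<Longrightarrow> g \<in> carrier G \<Longrightarrow> orbit G aE (\<phi>1 (u, g)) = u"
  and eq\<phi>1': "\<And>u g h. u \<in> U1 \<Longrightarrow> g \<in> carrier G \<Longrightarrow> h \<in> carrier G \<Longrightarrow> \<phi>1 (u, h \<otimes> g) = aE h (\<phi>1 (u, g))"
  and V: "openin (coset_space G TG \<Gamma>) V"
  and h\<psi>: "homeomorphic_maps (prod_topology (subtopology (coset_space G TG \<Gamma>) V) (subtopology TG \<Gamma>))
              (subtopology TG {g \<in> topspace TG. g <# \<Gamma> \<in> V}) \<psi> \<psi>'"
  and eq\<psi>: "\<And>v \<gamma>. v \<in> V \<Longrightarrow> \<gamma> \<in> \<Gamma> \<Longrightarrow> \<psi> (v, \<gamma>) <# \<Gamma> = v"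
  and eq\<psi>': "\<And>v \<gamma> h. v \<in> V \<Longrightarrow> \<gamma> \<in> \<Gamma> \<Longrightarrow> h \<in> \<Gamma> \<Longrightarrow> \<psi> (v, h \<otimes> \<gamma>) = \<psi> (v, \<gamma>) \<otimes> inv h"
begin

sublocale R: cact "subgrp G \<Gamma>" "subtopology TG \<Gamma>" EG aE
  by (rule E.cact_subgroup[OF sub])

lemma \<Gamma>c: "\<Gamma> \<subseteq> carrier G" using sub by (rule subgroup.subset)

definition "P1 = {e \<in> topspace EG. orbit G aE e \<in> U1}"
definition "PV = {g \<in> topspace TG. g <# \<Gamma> \<in> V}"
definition "cf y = inv (snd (\<phi>1' y)) <# \<Gamma>"
definition "Ob = {y \<in> P1. cf y \<in> V}"
definition "\<tau>0 y = (fst (\<phi>1' y), cf y)"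
definition "qq = orbit (subgrp G \<Gamma>) aE"
definition "\<tau> b = \<tau>0 (SOME y. y \<in> Ob \<and> qq y = b)"
definition "\<Phi> = (\<lambda>(b, \<gamma>). \<phi>1 (fst (\<tau> b), inv (\<psi> (snd (\<tau> b), \<gamma>))))"
definition "chiE y = (qq y, snd (\<psi>' (inv (snd (\<phi>1' y)))))"

lemma U1sub: "U1 \<subseteq> topspace (orbit_space G EG aE)" using U1 by (rule openin_subset)
lemma Vsub: "V \<subseteq> topspace (coset_space G TG \<Gamma>)" using V by (rule openin_subset)

lemma ts1: "topspace (prod_topology (subtopology (orbit_space G EG aE) U1) TG) = U1 \<times> carrier G"
  using U1sub E.top_G by (auto simp: topspace_prod_topology)
lemma ts2: "topspace (subtopology EG P1) = P1" unfolding P1_def by auto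
lemma ts3: "topspace (prod_topology (subtopology (coset_space G TG \<Gamma>) V) (subtopology TG \<Gamma>)) = V \<times> \<Gamma>"
  using Vsub \<Gamma>c E.top_G by (auto simp: topspace_prod_topology)
lemma ts4: "topspace (subtopology TG PV) = PV" unfolding PV_def by auto

lemma h\<phi>1': "homeomorphic_maps (prod_topology (subtopology (orbit_space G EG aE) U1) TG) (subtopology EG P1) \<phi>1 \<phi>1'"
  using h\<phi>1 unfolding P1_def .
lemma h\<psi>': "homeomorphic_maps (prod_topology (subtopology (coset_space G TG \<Gamma>) V) (subtopology TG \<Gamma>)) (subtopology TG PV) \<psi> \<psi>'"
  using h\<psi> unfolding PV_def .

lemma F1a: assumes "y \<in> P1" shows "\<phi>1' y \<in> U1 \<times> carrier G" "\<phi>1 (\<phi>1' y) = y"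
proof -
  have "\<phi>1' ` topspace (subtopology EG P1) \<subseteq> topspace (prod_topology (subtopology (orbit_space G EG aE) U1) TG)"
    using h\<phi>1' unfolding homeomorphic_maps_def by (metis continuous_map_image_subset_topspace)
  then show "\<phi>1' y \<in> U1 \<times> carrier G" using assms unfolding ts1 ts2 by blast
  show "\<phi>1 (\<phi>1' y) = y" using h\<phi>1' assms unfolding homeomorphic_maps_def ts2 by blast
qed

lemma F1b: assumes "u \<in> U1" "g \<in> carrier G" shows "\<phi>1 (u, g) \<in> P1" "\<phi>1' (\<phi>1 (u, g)) = (u, g)"
proof -
  have "\<phi>1 ` topspace (prod_topology (subtopology (orbit_space G EG aE) U1) TG) \<subseteq> topspace (subtopology EG P1)"
    using h\<phi>1' unfolding homeomorphic_maps_def by (metis continuous_map_image_subset_topspace)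
  then show "\<phi>1 (u, g) \<in> P1" using assms unfolding ts1 ts2 by blast
  show "\<phi>1' (\<phi>1 (u, g)) = (u, g)" using h\<phi>1' assms unfolding homeomorphic_maps_def ts1 by blast
qed

lemma F2a: assumes "g \<in> PV" shows "\<psi>' g \<in> V \<times> \<Gamma>" "\<psi> (\<psi>' g) = g"
proof -
  have "\<psi>' ` topspace (subtopology TG PV) \<subseteq> topspace (prod_topology (subtopology (coset_space G TG \<Gamma>) V) (subtopology TG \<Gamma>))"
    using h\<psi>' unfolding homeomorphic_maps_def by (metis continuous_map_image_subset_topspace)
  then show "\<psi>' g \<in> V \<times> \<Gamma>" using assms unfolding ts3 ts4 by blast
  show "\<psi> (\<psi>' g) = g" using h\<psi>' assms unfolding homeomorphic_maps_def ts4 by blast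
qed

lemma F2b: assumes "v \<in> V" "\<gamma> \<in> \<Gamma>" shows "\<psi> (v, \<gamma>) \<in> PV" "\<psi>' (\<psi> (v, \<gamma>)) = (v, \<gamma>)"
proof -
  have "\<psi> ` topspace (prod_topology (subtopology (coset_space G TG \<Gamma>) V) (subtopology TG \<Gamma>)) \<subseteq> topspace (subtopology TG PV)"
    using h\<psi>' unfolding homeomorphic_maps_def by (metis continuous_map_image_subset_topspace)
  then show "\<psi> (v, \<gamma>) \<in> PV" using assms unfolding ts3 ts4 by blast
  show "\<psi>' (\<psi> (v, \<gamma>)) = (v, \<gamma>)" using h\<psi>' assms unfolding homeomorphic_maps_def ts3 by blast
qed

lemma PV_iff: "g \<in> PV \<longleftrightarrow> g \<in> carrier G \<and> g <# \<Gamma> \<in> V"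
  unfolding PV_def using E.top_G by auto

lemma P1_sub: "P1 \<subseteq> topspace EG" unfolding P1_def by auto
lemma Ob_sub: "Ob \<subseteq> P1" unfolding Ob_def by auto

lemma qq_act: "\<delta> \<in> \<Gamma> \<Longrightarrow> y \<in> topspace EG \<Longrightarrow> qq (aE \<delta> y) = qq y"
  unfolding qq_def using R.orbit_act by simp

lemma Ob_inv:
  assumes y: "y \<in> Ob" and d: "\<delta> \<in> \<Gamma>"
  shows "aE \<delta> y \<in> Ob" "\<tau>0 (aE \<delta> y) = \<tau>0 y"
proof -
  have yP: "y \<in> P1" using y Ob_sub by auto
  obtain u g where ug: "\<phi>1' y = (u, g)" by fastforce
  have u: "u \<in> U1" and g: "g \<in> carrier G" using F1a(1)[OF yP] ug by auto
  have yeq: "y = \<phi>1 (u, g)" using F1a(2)[OF yP] ug by simp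
  have dc: "\<delta> \<in> carrier G" using d \<Gamma>c by auto
  have e: "aE \<delta> y = \<phi>1 (u, \<delta> \<otimes> g)" using eq\<phi>1'[OF u g dc] yeq by simp
  have dg: "\<delta> \<otimes> g \<in> carrier G" using dc g by simp
  have P: "aE \<delta> y \<in> P1" and ug2: "\<phi>1' (aE \<delta> y) = (u, \<delta> \<otimes> g)" using F1b[OF u dg] e by auto
  have "inv (\<delta> \<otimes> g) <# \<Gamma> = inv g <# \<Gamma>"
  proof (subst E.l_coset_eq_iff[OF sub])
    show "inv (\<delta> \<otimes> g) \<in> carrier G" "inv g \<in> carrier G" using dc g by auto
    have "inv (inv (\<delta> \<otimes> g)) \<otimes> inv g = \<delta>" using dc g by (simp add: E.m_assoc)
    then show "inv (inv (\<delta> \<otimes> g)) \<otimes> inv g \<in> \<Gamma>" using d by simp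
  qed
  then have cfe: "cf (aE \<delta> y) = cf y" unfolding cf_def using ug ug2 by simp
  show "aE \<delta> y \<in> Ob" using P cfe y unfolding Ob_def by simp
  show "\<tau>0 (aE \<delta> y) = \<tau>0 y" unfolding \<tau>0_def using cfe ug ug2 by simp
qed

lemma Ob_sat: assumes "y \<in> topspace EG" "qq y \<in> qq ` Ob" shows "y \<in> Ob"
proof -
  obtain y' where y': "y' \<in> Ob" "qq y = qq y'" using assms by auto
  have y'E: "y' \<in> topspace EG" using y' Ob_sub P1_sub by auto
  have "orbit (subgrp G \<Gamma>) aE y' = orbit (subgrp G \<Gamma>) aE y" using y' unfolding qq_def by simp
  then obtain \<delta> where "\<delta> \<in> \<Gamma>" "y = aE \<delta> y'" using R.orbit_eq_iff[OF y'E assms(1)] by auto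
  then show ?thesis using Ob_inv(1) y' by simp
qed

lemma \<tau>_qq: assumes "y \<in> Ob" shows "\<tau> (qq y) = \<tau>0 y"
proof -
  have ex: "\<exists>y'. y' \<in> Ob \<and> qq y' = qq y" using assms by blast
  define y' where "y' = (SOME y'. y' \<in> Ob \<and> qq y' = qq y)"
  have y': "y' \<in> Ob" "qq y' = qq y" using someI_ex[OF ex] unfolding y'_def by auto
  have y'E: "y' \<in> topspace EG" and yE: "y \<in> topspace EG" using y' assms Ob_sub P1_sub by auto
  have "orbit (subgrp G \<Gamma>) aE y' = orbit (subgrp G \<Gamma>) aE y" using y' unfolding qq_def by simp
  then obtain \<delta> where "\<delta> \<in> \<Gamma>" "y = aE \<delta> y'" using R.orbit_eq_iff[OF y'E yE] by auto
  then have "\<tau>0 y = \<tau>0 y'" using Ob_inv(2) y' by simp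
  then show ?thesis unfolding \<tau>_def y'_def[symmetric] by simp
qed

lemma Ob_open: "openin EG Ob"
proof -
  have P1o: "openin EG P1" unfolding P1_def using openin_continuous_map_preimage[OF E.cont_orbit U1] .
  have c1: "continuous_map (subtopology EG P1) (prod_topology (subtopology (orbit_space G EG aE) U1) TG) \<phi>1'"
    using h\<phi>1' unfolding homeomorphic_maps_def by blast
  have c2: "continuous_map (subtopology EG P1) TG (\<lambda>y. inv (snd (\<phi>1' y)))"
    by (rule E.cont_inv_of, rule cm_snd[OF c1])
  have c3: "continuous_map TG (coset_space G TG \<Gamma>) (\<lambda>g. g <# \<Gamma>)"
    unfolding coset_space_def by (rule continuous_map_quotient)
  have c4: "continuous_map (subtopology EG P1) (coset_space G TG \<Gamma>) cf"
    unfolding cf_def using cm_comp[OF c2 c3] .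
  have "openin (subtopology EG P1) {y \<in> topspace (subtopology EG P1). cf y \<in> V}"
    using openin_continuous_map_preimage[OF c4 V] .
  then have "openin (subtopology EG P1) Ob" unfolding ts2 Ob_def .
  then show ?thesis using P1o openin_open_subtopology by blast
qed

lemma Ob_pre: "{e \<in> topspace EG. qq e \<in> qq ` Ob} = Ob"
  using Ob_sat Ob_sub P1_sub by auto

lemma K1:
  assumes b: "b \<in> qq ` Ob" and ga: "\<gamma> \<in> \<Gamma>"
  shows "\<Phi> (b, \<gamma>) \<in> Ob" "qq (\<Phi> (b, \<gamma>)) = b" "chiE (\<Phi> (b, \<gamma>)) = (b, \<gamma>)"
    "\<And>h. h \<in> \<Gamma> \<Longrightarrow> \<Phi> (b, h \<otimes> \<gamma>) = aE h (\<Phi> (b, \<gamma>))"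
proof -
  obtain y where y: "y \<in> Ob" "b = qq y" using b by auto
  have yP: "y \<in> P1" using y Ob_sub by auto
  obtain u g where ug: "\<phi>1' y = (u, g)" by fastforce
  have u: "u \<in> U1" and g: "g \<in> carrier G" using F1a(1)[OF yP] ug by auto
  have yeq: "y = \<phi>1 (u, g)" using F1a(2)[OF yP] ug by simp
  define v where "v = inv g <# \<Gamma>"
  have v: "v \<in> V" using y ug unfolding Ob_def cf_def v_def by simp
  have tb: "\<tau> b = (u, v)" using \<tau>_qq[OF y(1)] y ug unfolding \<tau>0_def cf_def v_def by simp
  define w where "w = \<psi> (v, \<gamma>)"
  have wPV: "w \<in> PV" using F2b(1)[OF v ga] unfolding w_def .
  have wc: "w \<in> carrier G" using wPV PV_iff by simp
  have wv: "w <# \<Gamma> = v" using eq\<psi>[OF v ga] unfolding w_def .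
  have Phi: "\<Phi> (b, \<gamma>) = \<phi>1 (u, inv w)" by (simp add: \<Phi>_def tb w_def)
  define \<delta> where "\<delta> = inv w \<otimes> inv g"
  have d: "\<delta> \<in> \<Gamma>"
    using E.l_coset_eq_iff[OF sub wc, of "inv g"] wv g unfolding v_def \<delta>_def by simp
  have dc: "\<delta> \<in> carrier G" using d \<Gamma>c by auto
  have iw: "inv w = \<delta> \<otimes> g" unfolding \<delta>_def using wc g by (simp add: E.m_assoc)
  have Phi2: "\<Phi> (b, \<gamma>) = aE \<delta> y" unfolding Phi iw yeq using eq\<phi>1'[OF u g dc] .
  show "\<Phi> (b, \<gamma>) \<in> Ob" unfolding Phi2 using Ob_inv(1)[OF y(1) d] .
  have yE: "y \<in> topspace EG" using yP P1_sub by auto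
  show qb: "qq (\<Phi> (b, \<gamma>)) = b" unfolding Phi2 using qq_act[OF d yE] y by simp
  have iwc: "inv w \<in> carrier G" using wc by simp
  have "\<phi>1' (\<Phi> (b, \<gamma>)) = (u, inv w)" unfolding Phi using F1b(2)[OF u iwc] .
  then have "snd (\<psi>' (inv (snd (\<phi>1' (\<Phi> (b, \<gamma>)))))) = \<gamma>"
    using wc F2b(2)[OF v ga] unfolding w_def by simp
  then show "chiE (\<Phi> (b, \<gamma>)) = (b, \<gamma>)" unfolding chiE_def using qb by simp
  fix h assume h: "h \<in> \<Gamma>"
  have hc: "h \<in> carrier G" using h \<Gamma>c by auto
  have "\<Phi> (b, h \<otimes> \<gamma>) = \<phi>1 (u, inv (w \<otimes> inv h))"
    using eq\<psi>'[OF v ga h] by (simp add: \<Phi>_def tb w_def)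
  also have "inv (w \<otimes> inv h) = h \<otimes> inv w" using wc hc by (simp add: E.inv_mult_group)
  also have "\<phi>1 (u, h \<otimes> inv w) = aE h (\<phi>1 (u, inv w))" using eq\<phi>1'[OF u iwc hc] .
  finally show "\<Phi> (b, h \<otimes> \<gamma>) = aE h (\<Phi> (b, \<gamma>))" unfolding Phi .
qed

lemma K2: assumes y: "y \<in> Ob" shows "\<Phi> (chiE y) = y"
proof -
  have yP: "y \<in> P1" using y Ob_sub by auto
  obtain u g where ug: "\<phi>1' y = (u, g)" by fastforce
  have u: "u \<in> U1" and g: "g \<in> carrier G" using F1a(1)[OF yP] ug by auto
  have yeq: "y = \<phi>1 (u, g)" using F1a(2)[OF yP] ug by simp
  have cfy: "cf y = inv g <# \<Gamma>" unfolding cf_def ug by simp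
  have igPV: "inv g \<in> PV" using y g cfy unfolding PV_iff Ob_def by simp
  obtain v' \<gamma>' where vg: "\<psi>' (inv g) = (v', \<gamma>')" by fastforce
  have v': "v' \<in> V" and ga: "\<gamma>' \<in> \<Gamma>" using F2a(1)[OF igPV] vg by auto
  have psi: "\<psi> (v', \<gamma>') = inv g" using F2a(2)[OF igPV] vg by simp
  have "v' = inv g <# \<Gamma>" using eq\<psi>[OF v' ga] psi by simp
  then have vcf: "v' = cf y" using cfy by simp
  have "chiE y = (qq y, \<gamma>')" unfolding chiE_def using ug vg by simp
  moreover have "\<tau> (qq y) = (u, cf y)" using \<tau>_qq[OF y] ug unfolding \<tau>0_def by simp
  ultimately have "\<Phi> (chiE y) = \<phi>1 (u, inv (\<psi> (v', \<gamma>')))" by (simp add: \<Phi>_def vcf)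
  also have "\<dots> = y" using psi g yeq by simp
  finally show ?thesis .
qed

lemma B'_def: "orbit_space (subgrp G \<Gamma>) EG aE = quotient_topology EG qq"
  unfolding orbit_space_def qq_def ..

lemma U'sub: "qq ` Ob \<subseteq> topspace (orbit_space (subgrp G \<Gamma>) EG aE)"
  unfolding R.topspace_orbit_space qq_def[symmetric] using Ob_sub P1_sub by auto

lemma U'open: "openin (orbit_space (subgrp G \<Gamma>) EG aE) (qq ` Ob)"
  unfolding qq_def using R.open_orbit_image[OF Ob_open] .

lemma tsZ: "topspace (prod_topology (subtopology (orbit_space (subgrp G \<Gamma>) EG aE) (qq ` Ob)) (subtopology TG \<Gamma>)) = qq ` Ob \<times> \<Gamma>"
  using U'sub \<Gamma>c E.top_G by (auto simp: topspace_prod_topology)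

lemma tsOb: "topspace (subtopology EG Ob) = Ob" using Ob_sub P1_sub by auto

lemma subOb: "subtopology EG Ob = subtopology (subtopology EG P1) Ob"
  using Ob_sub by (simp add: subtopology_subtopology Int_absorb1)

lemma c1: "continuous_map (subtopology EG P1) (prod_topology (subtopology (orbit_space G EG aE) U1) TG) \<phi>1'"
  using h\<phi>1' unfolding homeomorphic_maps_def by blast

lemma c1O: "continuous_map (subtopology EG Ob) (prod_topology (subtopology (orbit_space G EG aE) U1) TG) \<phi>1'"
  unfolding subOb using continuous_map_from_subtopology[OF c1] .

lemma c_qq: "continuous_map (subtopology EG Ob) (subtopology (orbit_space (subgrp G \<Gamma>) EG aE) (qq ` Ob)) qq"
  unfolding continuous_map_in_subtopology
proof
  show "continuous_map (subtopology EG Ob) (orbit_space (subgrp G \<Gamma>) EG aE) qq"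
    unfolding qq_def by (rule continuous_map_from_subtopology, rule R.cont_orbit)
  show "qq \<in> topspace (subtopology EG Ob) \<rightarrow> qq ` Ob" unfolding tsOb by auto
qed

lemma igPV: "y \<in> Ob \<Longrightarrow> inv (snd (\<phi>1' y)) \<in> PV"
proof -
  assume y: "y \<in> Ob"
  then have "\<phi>1' y \<in> U1 \<times> carrier G" using F1a(1) Ob_sub by auto
  then have "snd (\<phi>1' y) \<in> carrier G" by (cases "\<phi>1' y") auto
  then show ?thesis using y unfolding PV_iff Ob_def cf_def by simp
qed

lemma c_a: "continuous_map (subtopology EG Ob) (subtopology TG PV) (\<lambda>y. inv (snd (\<phi>1' y)))"
  unfolding continuous_map_in_subtopology
proof
  show "continuous_map (subtopology EG Ob) TG (\<lambda>y. inv (snd (\<phi>1' y)))"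
    by (rule E.cont_inv_of, rule cm_snd[OF c1O])
  show "(\<lambda>y. inv (snd (\<phi>1' y))) \<in> topspace (subtopology EG Ob) \<rightarrow> PV"
    unfolding tsOb using igPV by auto
qed

lemma c_chi: "continuous_map (subtopology EG Ob)
   (prod_topology (subtopology (orbit_space (subgrp G \<Gamma>) EG aE) (qq ` Ob)) (subtopology TG \<Gamma>)) chiE"
proof -
  have c\<psi>': "continuous_map (subtopology TG PV) (prod_topology (subtopology (coset_space G TG \<Gamma>) V) (subtopology TG \<Gamma>)) \<psi>'"
    using h\<psi>' unfolding homeomorphic_maps_def by blast
  have "continuous_map (subtopology EG Ob) (subtopology TG \<Gamma>) (\<lambda>y. snd (\<psi>' (inv (snd (\<phi>1' y)))))"
    by (rule cm_snd, rule cm_comp[OF c_a c\<psi>'])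
  then show ?thesis unfolding chiE_def[abs_def]
    by (rule continuous_map_pairedI[OF c_qq])
qed

lemma c_tau0: "continuous_map (subtopology EG Ob) (prod_topology (subtopology (orbit_space G EG aE) U1) (subtopology (coset_space G TG \<Gamma>) V)) \<tau>0"
proof -
  have c2: "continuous_map (subtopology EG Ob) TG (\<lambda>y. inv (snd (\<phi>1' y)))"
    by (rule E.cont_inv_of, rule cm_snd[OF c1O])
  have c3: "continuous_map TG (coset_space G TG \<Gamma>) (\<lambda>g. g <# \<Gamma>)"
    unfolding coset_space_def by (rule continuous_map_quotient)
  have c4: "continuous_map (subtopology EG Ob) (subtopology (coset_space G TG \<Gamma>) V) cf"
    unfolding continuous_map_in_subtopology
  proof
    show "continuous_map (subtopology EG Ob) (coset_space G TG \<Gamma>) cf"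
      unfolding cf_def using cm_comp[OF c2 c3] .
    show "cf \<in> topspace (subtopology EG Ob) \<rightarrow> V" unfolding tsOb Ob_def by auto
  qed
  show ?thesis unfolding \<tau>0_def[abs_def]
    by (rule continuous_map_pairedI[OF cm_fst[OF c1O] c4])
qed

lemma c_tau: "continuous_map (subtopology (orbit_space (subgrp G \<Gamma>) EG aE) (qq ` Ob))
   (prod_topology (subtopology (orbit_space G EG aE) U1) (subtopology (coset_space G TG \<Gamma>) V)) \<tau>"
  unfolding B'_def
proof (rule quotient_continuous_on_open[OF Ob_open])
  show "\<And>x. x \<in> topspace EG \<Longrightarrow> qq x \<in> qq ` Ob \<Longrightarrow> x \<in> Ob" by (rule Ob_sat)
  show "continuous_map (subtopology EG Ob) (prod_topology (subtopology (orbit_space G EG aE) U1) (subtopology (coset_space G TG \<Gamma>) V)) (\<lambda>x. \<tau> (qq x))"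
    by (rule continuous_map_eq[OF c_tau0]) (simp add: tsOb \<tau>_qq)
qed

lemma c_Phi: "continuous_map
   (prod_topology (subtopology (orbit_space (subgrp G \<Gamma>) EG aE) (qq ` Ob)) (subtopology TG \<Gamma>))
   (subtopology EG Ob) \<Phi>"
proof -
  let ?Z = "prod_topology (subtopology (orbit_space (subgrp G \<Gamma>) EG aE) (qq ` Ob)) (subtopology TG \<Gamma>)"
  have ct: "continuous_map ?Z (prod_topology (subtopology (orbit_space G EG aE) U1) (subtopology (coset_space G TG \<Gamma>) V)) (\<lambda>p. \<tau> (fst p))"
    by (rule cm_comp[OF continuous_map_fst c_tau])
  have m1: "continuous_map ?Z (subtopology (orbit_space G EG aE) U1) (\<lambda>p. fst (\<tau> (fst p)))"
    by (rule cm_fst[OF ct])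
  have m2: "continuous_map ?Z (prod_topology (subtopology (coset_space G TG \<Gamma>) V) (subtopology TG \<Gamma>)) (\<lambda>p. (snd (\<tau> (fst p)), snd p))"
    by (rule continuous_map_pairedI[OF cm_snd[OF ct] continuous_map_snd])
  have c\<psi>: "continuous_map (prod_topology (subtopology (coset_space G TG \<Gamma>) V) (subtopology TG \<Gamma>)) TG \<psi>"
    using h\<psi>' unfolding homeomorphic_maps_def by (blast intro: continuous_map_into_fulltopology)
  have m3: "continuous_map ?Z TG (\<lambda>p. inv (\<psi> (snd (\<tau> (fst p)), snd p)))"
    by (rule E.cont_inv_of, rule cm_comp[OF m2 c\<psi>])
  have m: "continuous_map ?Z (prod_topology (subtopology (orbit_space G EG aE) U1) TG)
             (\<lambda>p. (fst (\<tau> (fst p)), inv (\<psi> (snd (\<tau> (fst p)), snd p))))"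
    by (rule continuous_map_pairedI[OF m1 m3])
  have c\<phi>1: "continuous_map (prod_topology (subtopology (orbit_space G EG aE) U1) TG) (subtopology EG P1) \<phi>1"
    using h\<phi>1' unfolding homeomorphic_maps_def by blast
  have cP: "continuous_map ?Z (subtopology EG P1) \<Phi>"
    by (rule continuous_map_eq[OF cm_comp[OF m c\<phi>1]]) (simp add: \<Phi>_def case_prod_unfold)
  have "continuous_map ?Z (subtopology (subtopology EG P1) Ob) \<Phi>"
    unfolding continuous_map_in_subtopology[of ?Z "subtopology EG P1" Ob] tsZ
    using cP K1(1) by auto
  then show ?thesis unfolding subOb .
qed

lemma restr_triv:
  "openin (orbit_space (subgrp G \<Gamma>) EG aE) (qq ` Ob) \<and>
   homeomorphic_map (prod_topology (subtopology (orbit_space (subgrp G \<Gamma>) EG aE) (qq ` Ob)) (subtopology TG \<Gamma>))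
      (subtopology EG {e \<in> topspace EG. qq e \<in> qq ` Ob}) \<Phi> \<and>
   (\<forall>u\<in>qq ` Ob. \<forall>g\<in>\<Gamma>. qq (\<Phi> (u, g)) = u \<and> (\<forall>h\<in>\<Gamma>. \<Phi> (u, h \<otimes> g) = aE h (\<Phi> (u, g))))"
proof (intro conjI)
  show "openin (orbit_space (subgrp G \<Gamma>) EG aE) (qq ` Ob)" by (rule U'open)
  have "homeomorphic_maps (prod_topology (subtopology (orbit_space (subgrp G \<Gamma>) EG aE) (qq ` Ob)) (subtopology TG \<Gamma>))
      (subtopology EG Ob) \<Phi> chiE"
    unfolding homeomorphic_maps_def using c_Phi c_chi K1(3) K2 unfolding tsZ tsOb by auto
  then show "homeomorphic_map (prod_topology (subtopology (orbit_space (subgrp G \<Gamma>) EG aE) (qq ` Ob)) (subtopology TG \<Gamma>))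
      (subtopology EG {e \<in> topspace EG. qq e \<in> qq ` Ob}) \<Phi>"
    unfolding Ob_pre by (rule homeomorphic_maps_imp_map)
  show "\<forall>u\<in>qq ` Ob. \<forall>g\<in>\<Gamma>. qq (\<Phi> (u, g)) = u \<and> (\<forall>h\<in>\<Gamma>. \<Phi> (u, h \<otimes> g) = aE h (\<Phi> (u, g)))"
    using K1(2,4) by blast
qed

end

lemma universal_restrict:
  assumes U: "universal_bundle G TG EG aE" and sub: "subgroup \<Gamma> G"
    and pbS: "principal_bundle (subgrp G \<Gamma>) (subtopology TG \<Gamma>) TG (\<lambda>h g. g \<otimes>\<^bsub>G\<^esub> inv\<^bsub>G\<^esub> h)
        (coset_space G TG \<Gamma>) (\<lambda>g. g <#\<^bsub>G\<^esub> \<Gamma>)"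
  shows "universal_bundle (subgrp G \<Gamma>) (subtopology TG \<Gamma>) EG aE"
proof -
  have ne: "topspace EG \<noteq> {}" and ctr: "contractible_space EG"
    and pbG: "principal_bundle G TG EG aE (orbit_space G EG aE) (orbit G aE)"
    using U unfolding universal_bundle_def by auto
  have caE: "continuous_action G TG EG aE" using pbG unfolding principal_bundle_def by blast
  interpret E: cact G TG EG aE using caE by (simp add: cact_def)
  interpret R: cact "subgrp G \<Gamma>" "subtopology TG \<Gamma>" EG aE by (rule E.cact_subgroup[OF sub])
  have \<Gamma>c: "\<Gamma> \<subseteq> carrier G" using sub by (rule subgroup.subset)
  have loc: "\<exists>U \<Phi>. openin (orbit_space (subgrp G \<Gamma>) EG aE) U \<and> b \<in> U \<and>
        homeomorphic_map (prod_topology (subtopology (orbit_space (subgrp G \<Gamma>) EG aE) U) (subtopology TG \<Gamma>))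
                         (subtopology EG {e \<in> topspace EG. orbit (subgrp G \<Gamma>) aE e \<in> U}) \<Phi> \<and>
        (\<forall>u\<in>U. \<forall>g\<in>carrier (subgrp G \<Gamma>). orbit (subgrp G \<Gamma>) aE (\<Phi> (u, g)) = u \<and>
            (\<forall>h\<in>carrier (subgrp G \<Gamma>). \<Phi> (u, h \<otimes>\<^bsub>subgrp G \<Gamma>\<^esub> g) = aE h (\<Phi> (u, g))))"
    if b: "b \<in> topspace (orbit_space (subgrp G \<Gamma>) EG aE)" for b
  proof -
    obtain e where e: "e \<in> topspace EG" "b = orbit (subgrp G \<Gamma>) aE e"
      using b unfolding R.topspace_orbit_space by auto
    have "orbit G aE e \<in> topspace (orbit_space G EG aE)"
      using e unfolding E.topspace_orbit_space by auto
    then obtain U1 \<phi>1 where U1: "openin (orbit_space G EG aE) U1" "orbit G aE e \<in> U1"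
      and h1: "homeomorphic_map (prod_topology (subtopology (orbit_space G EG aE) U1) TG)
                         (subtopology EG {e \<in> topspace EG. orbit G aE e \<in> U1}) \<phi>1"
      and q1: "\<forall>u\<in>U1. \<forall>g\<in>carrier G. orbit G aE (\<phi>1 (u, g)) = u \<and>
            (\<forall>h\<in>carrier G. \<phi>1 (u, h \<otimes>\<^bsub>G\<^esub> g) = aE h (\<phi>1 (u, g)))"
      using pbG unfolding principal_bundle_def by meson
    obtain \<phi>1' where h1': "homeomorphic_maps (prod_topology (subtopology (orbit_space G EG aE) U1) TG)
                         (subtopology EG {e \<in> topspace EG. orbit G aE e \<in> U1}) \<phi>1 \<phi>1'"
      using h1 homeomorphic_map_maps by blast
    have U1sub: "U1 \<subseteq> topspace (orbit_space G EG aE)" using U1(1) by (rule openin_subset)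
    have eP: "e \<in> topspace (subtopology EG {e \<in> topspace EG. orbit G aE e \<in> U1})" using e U1 by auto
    have "\<phi>1' ` topspace (subtopology EG {e \<in> topspace EG. orbit G aE e \<in> U1})
           \<subseteq> topspace (prod_topology (subtopology (orbit_space G EG aE) U1) TG)"
      using h1' unfolding homeomorphic_maps_def by (metis continuous_map_image_subset_topspace)
    then have "\<phi>1' e \<in> U1 \<times> carrier G" using eP U1sub E.top_G by (auto simp: topspace_prod_topology)
    then obtain u0 g0 where ug0: "\<phi>1' e = (u0, g0)" "u0 \<in> U1" "g0 \<in> carrier G" by (cases "\<phi>1' e") auto
    define c0 where "c0 = inv\<^bsub>G\<^esub> g0 <#\<^bsub>G\<^esub> \<Gamma>"
    have "c0 \<in> topspace (coset_space G TG \<Gamma>)"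
      unfolding coset_space_def topspace_quotient_topology c0_def using ug0 E.top_G by auto
    then obtain V \<psi> where V: "openin (coset_space G TG \<Gamma>) V" "c0 \<in> V"
      and h2: "homeomorphic_map (prod_topology (subtopology (coset_space G TG \<Gamma>) V) (subtopology TG \<Gamma>))
                         (subtopology TG {g \<in> topspace TG. g <#\<^bsub>G\<^esub> \<Gamma> \<in> V}) \<psi>"
      and q2: "\<forall>u\<in>V. \<forall>g\<in>carrier (subgrp G \<Gamma>). \<psi> (u, g) <#\<^bsub>G\<^esub> \<Gamma> = u \<and>
            (\<forall>h\<in>carrier (subgrp G \<Gamma>). \<psi> (u, h \<otimes>\<^bsub>subgrp G \<Gamma>\<^esub> g) = \<psi> (u, g) \<otimes>\<^bsub>G\<^esub> inv\<^bsub>G\<^esub> h)"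
      using pbS unfolding principal_bundle_def by meson
    obtain \<psi>' where h2': "homeomorphic_maps (prod_topology (subtopology (coset_space G TG \<Gamma>) V) (subtopology TG \<Gamma>))
                         (subtopology TG {g \<in> topspace TG. g <#\<^bsub>G\<^esub> \<Gamma> \<in> V}) \<psi> \<psi>'"
      using h2 homeomorphic_map_maps by blast
    have RR: "restr G TG EG aE \<Gamma> U1 \<phi>1 \<phi>1' V \<psi> \<psi>'"
      unfolding restr_def restr_axioms_def
      using caE sub U1(1) h1' q1 V(1) h2' q2 by (simp add: cact_def)
    interpret Rs: restr G TG EG aE \<Gamma> U1 \<phi>1 \<phi>1' V \<psi> \<psi>' by (rule RR)
    have eO: "e \<in> Rs.Ob"
      unfolding Rs.Ob_def Rs.P1_def Rs.cf_def using e U1 ug0 V(2) c0_def by simp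
    have bU: "b \<in> Rs.qq ` Rs.Ob" using e eO unfolding Rs.qq_def by auto
    have qqe: "Rs.qq = orbit (subgrp G \<Gamma>) aE" by (simp add: Rs.qq_def)
    have T: "openin (orbit_space (subgrp G \<Gamma>) EG aE) (Rs.qq ` Rs.Ob) \<and>
      homeomorphic_map (prod_topology (subtopology (orbit_space (subgrp G \<Gamma>) EG aE) (Rs.qq ` Rs.Ob)) (subtopology TG \<Gamma>))
      (subtopology EG {e \<in> topspace EG. Rs.qq e \<in> Rs.qq ` Rs.Ob}) Rs.\<Phi> \<and>
      (\<forall>u\<in>Rs.qq ` Rs.Ob. \<forall>g\<in>\<Gamma>. Rs.qq (Rs.\<Phi> (u, g)) = u \<and> (\<forall>h\<in>\<Gamma>. Rs.\<Phi> (u, h \<otimes>\<^bsub>G\<^esub> g) = aE h (Rs.\<Phi> (u, g))))"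
      by (rule Rs.restr_triv)
    show ?thesis
      apply (rule exI[of _ "Rs.qq ` Rs.Ob"], rule exI[of _ Rs.\<Phi>])
      using T bU unfolding qqe by simp
  qed
  have pb: "principal_bundle (subgrp G \<Gamma>) (subtopology TG \<Gamma>) EG aE (orbit_space (subgrp G \<Gamma>) EG aE) (orbit (subgrp G \<Gamma>) aE)"
    unfolding principal_bundle_def
  proof (intro conjI)
    show "continuous_action (subgrp G \<Gamma>) (subtopology TG \<Gamma>) EG aE" using R.ca .
    show "continuous_map EG (orbit_space (subgrp G \<Gamma>) EG aE) (orbit (subgrp G \<Gamma>) aE)" by (rule R.cont_orbit)
    show "orbit (subgrp G \<Gamma>) aE ` topspace EG = topspace (orbit_space (subgrp G \<Gamma>) EG aE)"
      by (simp add: R.topspace_orbit_space)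
    show "\<forall>g\<in>carrier (subgrp G \<Gamma>). \<forall>e\<in>topspace EG. orbit (subgrp G \<Gamma>) aE (aE g e) = orbit (subgrp G \<Gamma>) aE e"
      using R.orbit_act by blast
    show "\<forall>b\<in>topspace (orbit_space (subgrp G \<Gamma>) EG aE). \<exists>U \<phi>. openin (orbit_space (subgrp G \<Gamma>) EG aE) U \<and> b \<in> U \<and>
        homeomorphic_map (prod_topology (subtopology (orbit_space (subgrp G \<Gamma>) EG aE) U) (subtopology TG \<Gamma>))
                         (subtopology EG {e \<in> topspace EG. orbit (subgrp G \<Gamma>) aE e \<in> U}) \<phi> \<and>
        (\<forall>u\<in>U. \<forall>g\<in>carrier (subgrp G \<Gamma>). orbit (subgrp G \<Gamma>) aE (\<phi> (u, g)) = u \<and>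
            (\<forall>h\<in>carrier (subgrp G \<Gamma>). \<phi> (u, h \<otimes>\<^bsub>subgrp G \<Gamma>\<^esub> g) = aE h (\<phi> (u, g))))"
      using loc by blast
  qed
  show ?thesis unfolding universal_bundle_def using ne ctr pb by blast
qed

section \<open>Slices\<close>

locale slc = cact G TG X act
  for G (structure) and TG :: "'g topology" and X :: "'x topology" and act +
  fixes S :: "'x set" and \<Gamma> :: "'g set" and U :: "'g set set" and sec :: "'g set \<Rightarrow> 'g"
  assumes S: "S \<subseteq> topspace X"
  and sub: "subgroup \<Gamma> G"
  and SL2: "\<And>g. g \<in> carrier G \<Longrightarrow> act g ` S \<inter> S \<noteq> {} \<Longrightarrow> g \<in> \<Gamma>"
  and const: "\<And>g s. g \<in> \<Gamma> \<Longrightarrow> s \<in> S \<Longrightarrow> act g s = s"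
  and Uo: "openin (coset_space G TG \<Gamma>) U" and \<Gamma>U: "\<Gamma> \<in> U"
  and csec: "continuous_map (subtopology (coset_space G TG \<Gamma>) U) TG sec"
  and seccos: "\<And>c. c \<in> U \<Longrightarrow> sec c <# \<Gamma> = c"
  and emb: "embedding_map (prod_topology (subtopology (coset_space G TG \<Gamma>) U) (subtopology X S)) X
                      (\<lambda>(c, s). act (sec c) s)"
  and opn: "open_map (prod_topology (subtopology (coset_space G TG \<Gamma>) U) (subtopology X S)) X
                 (\<lambda>(c, s). act (sec c) s)"
begin

lemma \<Gamma>c: "\<Gamma> \<subseteq> carrier G" using sub by (rule subgroup.subset)

lemma Usub: "U \<subseteq> topspace (coset_space G TG \<Gamma>)" using Uo by (rule openin_subset)

lemma tsUS: "topspace (prod_topology (subtopology (coset_space G TG \<Gamma>) U) (subtopology X S)) = U \<times> S"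
  using Usub S by (auto simp: topspace_prod_topology)

lemma sec_in: "c \<in> U \<Longrightarrow> sec c \<in> carrier G"
  using continuous_map_image_subset_topspace[OF csec] Usub top_G by auto

lemma sec\<Gamma>: "sec \<Gamma> \<in> \<Gamma>"
proof -
  have sc: "sec \<Gamma> \<in> carrier G" using sec_in \<Gamma>U by blast
  have "sec \<Gamma> <# \<Gamma> = \<one> <# \<Gamma>" using seccos[OF \<Gamma>U] \<Gamma>c by (simp add: lcos_mult_one)
  then have "inv (sec \<Gamma>) \<otimes> \<one> \<in> \<Gamma>" using l_coset_eq_iff[OF sub sc] by simp
  then have "inv (sec \<Gamma>) \<in> \<Gamma>" using sc by simp
  then have "inv (inv (sec \<Gamma>)) \<in> \<Gamma>" by (rule subgroup.m_inv_closed[OF sub])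
  then show ?thesis using sc by simp
qed

lemma Stab_S: assumes s: "s \<in> S" shows "Stab G act s = \<Gamma>"
proof
  show "Stab G act s \<subseteq> \<Gamma>"
  proof
    fix g assume "g \<in> Stab G act s"
    then have g: "g \<in> carrier G" "act g s = s" unfolding Stab_def by auto
    then have "s \<in> act g ` S \<inter> S" using s by (auto intro: rev_image_eqI)
    then show "g \<in> \<Gamma>" using SL2[OF g(1)] by blast
  qed
  show "\<Gamma> \<subseteq> Stab G act s" unfolding Stab_def using const s \<Gamma>c by auto
qed

lemma uniq:
  assumes g: "g \<in> carrier G" "g' \<in> carrier G" and s: "s \<in> S" "s' \<in> S" and eq: "act g s = act g' s'"
  shows "s = s'" "inv g' \<otimes> g \<in> \<Gamma>"
proof -
  have sX: "s \<in> topspace X" "s' \<in> topspace X" using s S by auto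
  have "act (inv g' \<otimes> g) s = act (inv g') (act g' s')" using g sX eq by (simp add: act_mult)
  also have "\<dots> = s'" using act_inv1 g sX by simp
  finally have e: "act (inv g' \<otimes> g) s = s'" .
  then have "s' \<in> act (inv g' \<otimes> g) ` S \<inter> S" using s by (auto intro: rev_image_eqI)
  then show h: "inv g' \<otimes> g \<in> \<Gamma>" using SL2 g by blast
  show "s = s'" using const[OF h s(1)] e by simp
qed

definition "T = (\<lambda>(c, s). act (sec c) s) ` (U \<times> S)"
definition "W = (\<lambda>(g, s). act g s) ` (carrier G \<times> S)"

lemma T_open: "openin X T"
proof -
  have "openin X ((\<lambda>(c, s). act (sec c) s) ` topspace (prod_topology (subtopology (coset_space G TG \<Gamma>) U) (subtopology X S)))"
    using opn openin_topspace unfolding open_map_def by blast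
  then show ?thesis unfolding tsUS T_def .
qed

lemma T_sub_W: "T \<subseteq> W" unfolding T_def W_def using sec_in by auto

lemma W_iff: "x \<in> W \<longleftrightarrow> (\<exists>g\<in>carrier G. \<exists>s\<in>S. x = act g s)"
  unfolding W_def by auto

lemma W_sub: "W \<subseteq> topspace X" unfolding W_def using act_in S by auto

lemma S_sub_W: "S \<subseteq> W"
proof
  fix s assume "s \<in> S"
  then have "s = act \<one> s" using act_one S by auto
  then show "s \<in> W" unfolding W_iff using \<open>s \<in> S\<close> by blast
qed

lemma in_T: "s \<in> S \<Longrightarrow> s \<in> T"
  unfolding T_def using const[OF sec\<Gamma>] \<Gamma>U by (auto intro!: rev_image_eqI[of "(\<Gamma>, s)"])

lemma W_union: "W = (\<Union>g\<in>carrier G. act g ` T)"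
proof
  show "W \<subseteq> (\<Union>g\<in>carrier G. act g ` T)"
  proof
    fix x assume "x \<in> W"
    then obtain g s where gs: "g \<in> carrier G" "s \<in> S" "x = act g s" unfolding W_iff by blast
    then show "x \<in> (\<Union>g\<in>carrier G. act g ` T)" using in_T by blast
  qed
  show "(\<Union>g\<in>carrier G. act g ` T) \<subseteq> W"
  proof
    fix x assume "x \<in> (\<Union>g\<in>carrier G. act g ` T)"
    then obtain g t where gt: "g \<in> carrier G" "t \<in> T" "x = act g t" by blast
    have "t \<in> W" using T_sub_W gt by auto
    then obtain h s where "h \<in> carrier G" "s \<in> S" "t = act h s" unfolding W_iff by blast
    then have "x = act (g \<otimes> h) s" "g \<otimes> h \<in> carrier G" using gt S act_mult by auto
    then show "x \<in> W" unfolding W_iff using \<open>s \<in> S\<close> by blast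
  qed
qed

lemma W_open: "openin X W"
  unfolding W_union using open_act T_open by auto

lemma W_act: "x \<in> W \<Longrightarrow> h \<in> carrier G \<Longrightarrow> act h x \<in> W"
proof -
  assume x: "x \<in> W" and h: "h \<in> carrier G"
  then obtain g s where gs: "g \<in> carrier G" "s \<in> S" "x = act g s" unfolding W_iff by blast
  then have "act h x = act (h \<otimes> g) s" using h S act_mult by auto
  then show ?thesis unfolding W_iff using gs h by blast
qed

lemma W_sat: assumes y: "y \<in> topspace X" and o: "orbit G act y \<in> orbit G act ` W" shows "y \<in> W"
proof -
  obtain x where x: "x \<in> W" "orbit G act y = orbit G act x" using o by auto
  have "x \<in> topspace X" using x W_sub by auto
  then obtain g where "g \<in> carrier G" "y = act g x" using orbit_eq_iff[of x y] x y by auto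
  then show ?thesis using W_act x by simp
qed

lemma Stab_W: assumes x: "x \<in> W" shows "\<exists>g\<in>carrier G. Stab G act x = (\<lambda>h. g \<otimes> h \<otimes> inv g) ` \<Gamma>"
proof -
  obtain g s where gs: "g \<in> carrier G" "s \<in> S" "x = act g s" using x unfolding W_iff by blast
  have "Stab G act x = (\<lambda>h. g \<otimes> h \<otimes> inv g) ` \<Gamma>" using Stab_act[of g s] Stab_S[of s] gs S by auto
  then show ?thesis using gs by blast
qed

end

context cact
begin

lemma slc_of:
  assumes "constant_slice G TG X act S \<Gamma>"
  shows "\<exists>U sec. slc G TG X act S \<Gamma> U sec"
proof -
  have sl: "slice G TG X act S \<Gamma>" and A4: "\<forall>g\<in>\<Gamma>. \<forall>s\<in>S. act g s = s"
    using assms unfolding constant_slice_def by auto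
  have A1: "S \<subseteq> topspace X" using sl unfolding slice_def by (elim conjE) assumption
  have A2: "subgroup \<Gamma> G" using sl unfolding slice_def by (elim conjE) assumption
  have A3: "\<forall>g\<in>carrier G. act g ` S \<inter> S \<noteq> {} \<longrightarrow> g \<in> \<Gamma>" using sl unfolding slice_def by (elim conjE) assumption
  obtain U sec where B: "openin (coset_space G TG \<Gamma>) U" "\<Gamma> \<in> U"
        "continuous_map (subtopology (coset_space G TG \<Gamma>) U) TG sec"
        "\<forall>c\<in>U. sec c <# \<Gamma> = c"
        "embedding_map (prod_topology (subtopology (coset_space G TG \<Gamma>) U) (subtopology X S)) X
                      (\<lambda>(c, s). act (sec c) s)"
        "open_map (prod_topology (subtopology (coset_space G TG \<Gamma>) U) (subtopology X S)) X
                 (\<lambda>(c, s). act (sec c) s)"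
    using sl unfolding slice_def by (elim conjE exE) (rule that, assumption+)
  have "slc G TG X act S \<Gamma> U sec"
    apply (rule slc.intro)
     apply (rule cact_axioms)
    apply (rule slc_axioms.intro)
              apply (rule A1)
             apply (rule A2)
            apply (erule A3[rule_format], assumption)
           apply (erule A4[rule_format], assumption)
          apply (rule B(1))
         apply (rule B(2))
        apply (rule B(3))
       apply (erule B(4)[rule_format])
      apply (rule B(5))
     apply (rule B(6))
    done
  then show ?thesis by blast
qed

lemma slice_nbhd:
  assumes x: "x \<in> topspace X" and sl: "\<exists>S. x \<in> S \<and> constant_slice G TG X act S (Stab G act x)"
  shows "\<exists>W. openin X W \<and> x \<in> W \<and> (\<forall>y\<in>topspace X. orbit G act y \<in> orbit G act ` W \<longrightarrow> y \<in> W) \<and>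
             (\<forall>y\<in>W. \<exists>g\<in>carrier G. Stab G act y = (\<lambda>h. g \<otimes> h \<otimes> inv g) ` Stab G act x)"
proof -
  obtain S where S: "x \<in> S" "constant_slice G TG X act S (Stab G act x)" using sl by blast
  obtain U sec where "slc G TG X act S (Stab G act x) U sec" using slc_of[OF S(2)] by blast
  then interpret sl: slc G TG X act S "Stab G act x" U sec .
  have "x \<in> sl.W" using S(1) sl.S_sub_W by blast
  then show ?thesis
    apply (intro exI[of _ sl.W] conjI)
       apply (rule sl.W_open)
      apply assumption
    using sl.W_sat apply blast
    using sl.Stab_W by blast
qed

definition "Cj x y \<longleftrightarrow> (\<exists>g\<in>carrier G. Stab G act y = (\<lambda>h. g \<otimes> h \<otimes> inv g) ` Stab G act x)"

lemma Cj_trans: "Cj x y \<Longrightarrow> Cj y z \<Longrightarrow> Cj x z"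
proof -
  assume "Cj x y" "Cj y z"
  then obtain g k where g: "g \<in> carrier G" "Stab G act y = (\<lambda>h. g \<otimes> h \<otimes> inv g) ` Stab G act x"
    and k: "k \<in> carrier G" "Stab G act z = (\<lambda>h. k \<otimes> h \<otimes> inv k) ` Stab G act y"
    unfolding Cj_def by blast
  have "Stab G act z = (\<lambda>h. (k \<otimes> g) \<otimes> h \<otimes> inv (k \<otimes> g)) ` Stab G act x"
    using k g conj_comp[OF k(1) g(1) Stab_sub] by simp
  then show "Cj x z" unfolding Cj_def using g k by (intro bexI[of _ "k \<otimes> g"]) auto
qed

lemma Cj_sym: "Cj x y \<Longrightarrow> Cj y x"
proof -
  assume "Cj x y"
  then obtain g where g: "g \<in> carrier G" "Stab G act y = (\<lambda>h. g \<otimes> h \<otimes> inv g) ` Stab G act x"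
    unfolding Cj_def by blast
  have "Stab G act x = (\<lambda>h. inv g \<otimes> h \<otimes> inv (inv g)) ` Stab G act y"
    using g conj_inv_cancel[OF g(1) Stab_sub] by simp
  then show "Cj y x" unfolding Cj_def using g by (intro bexI[of _ "inv g"]) auto
qed

lemma Cj_refl: "Cj x x"
  unfolding Cj_def using conj_one[OF Stab_sub] by (intro bexI[of _ \<one>]) auto

lemma Cj_act: "g \<in> carrier G \<Longrightarrow> y \<in> topspace X \<Longrightarrow> Cj y (act g y)"
  unfolding Cj_def using Stab_act by blast

lemma conj_all:
  assumes conn: "connected_space (orbit_space G X act)"
    and slices: "\<forall>x\<in>topspace X. \<exists>S. x \<in> S \<and> constant_slice G TG X act S (Stab G act x)"
    and x0: "x0 \<in> topspace X" and y0: "y0 \<in> topspace X"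
  shows "Cj x0 y0"
proof (rule ccontr)
  assume ny: "\<not> Cj x0 y0"
  define A where "A = {y \<in> topspace X. Cj x0 y}"
  define B where "B = {y \<in> topspace X. \<not> Cj x0 y}"
  have nb: "\<exists>W. openin X W \<and> y \<in> W \<and> (\<forall>z\<in>topspace X. orbit G act z \<in> orbit G act ` W \<longrightarrow> z \<in> W) \<and>
             (\<forall>z\<in>W. Cj y z)" if "y \<in> topspace X" for y
    using slice_nbhd[OF that] slices that unfolding Cj_def by blast
  have Aopen: "openin X A"
    unfolding openin_subopen[of X A]
  proof
    fix y assume y: "y \<in> A"
    then obtain W where W: "openin X W" "y \<in> W" "\<forall>z\<in>W. Cj y z" using nb A_def by blast
    have "W \<subseteq> A" using W y Cj_trans openin_subset[OF W(1)] unfolding A_def by blast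
    then show "\<exists>T. openin X T \<and> y \<in> T \<and> T \<subseteq> A" using W by blast
  qed
  have Bopen: "openin X B"
    unfolding openin_subopen[of X B]
  proof
    fix y assume y: "y \<in> B"
    then obtain W where W: "openin X W" "y \<in> W" "\<forall>z\<in>W. Cj y z" using nb B_def by blast
    have "W \<subseteq> B"
    proof
      fix z assume z: "z \<in> W"
      have "\<not> Cj x0 z"
      proof
        assume "Cj x0 z"
        then have "Cj x0 y" using Cj_trans Cj_sym W(3) z by blast
        then show False using y B_def by simp
      qed
      then show "z \<in> B" using z openin_subset[OF W(1)] B_def by auto
    qed
    then show "\<exists>T. openin X T \<and> y \<in> T \<and> T \<subseteq> B" using W by blast
  qed
  have satA: "{y \<in> topspace X. orbit G act y \<in> orbit G act ` A} = A"
  proof (intro equalityI subsetI)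
    fix y assume "y \<in> {y \<in> topspace X. orbit G act y \<in> orbit G act ` A}"
    then obtain a where a: "a \<in> A" "y \<in> topspace X" "orbit G act y = orbit G act a" by auto
    then obtain g where "g \<in> carrier G" "y = act g a" using orbit_eq_iff[of a y] A_def by auto
    then have "Cj a y" using Cj_act a A_def by auto
    then show "y \<in> A" using a Cj_trans A_def by auto
  next
    fix y assume "y \<in> A" then show "y \<in> {y \<in> topspace X. orbit G act y \<in> orbit G act ` A}" using A_def by auto
  qed
  have satB: "{y \<in> topspace X. orbit G act y \<in> orbit G act ` B} = B"
  proof (intro equalityI subsetI)
    fix y assume "y \<in> {y \<in> topspace X. orbit G act y \<in> orbit G act ` B}"
    then obtain b where b: "b \<in> B" "y \<in> topspace X" "orbit G act y = orbit G act b" by auto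
    then obtain g where "g \<in> carrier G" "b = act g y" using orbit_eq_iff[of y b] B_def by auto
    then have "Cj y b" using Cj_act b by auto
    then show "y \<in> B" using b Cj_trans B_def by auto
  next
    fix y assume "y \<in> B" then show "y \<in> {y \<in> topspace X. orbit G act y \<in> orbit G act ` B}" using B_def by auto
  qed
  have oA: "openin (orbit_space G X act) (orbit G act ` A)" using open_orbit_image[OF Aopen] .
  have oB: "openin (orbit_space G X act) (orbit G act ` B)" using open_orbit_image[OF Bopen] .
  have cov: "topspace (orbit_space G X act) \<subseteq> orbit G act ` A \<union> orbit G act ` B"
    unfolding topspace_orbit_space A_def B_def by auto
  have dis: "orbit G act ` A \<inter> orbit G act ` B = {}"
  proof (rule ccontr)
    assume "orbit G act ` A \<inter> orbit G act ` B \<noteq> {}"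
    then obtain a b where ab: "a \<in> A" "b \<in> B" "orbit G act a = orbit G act b" by auto
    then have "a \<in> {y \<in> topspace X. orbit G act y \<in> orbit G act ` B}" using A_def by auto
    then have "a \<in> B" using satB by simp
    then show False using ab A_def B_def by auto
  qed
  have neA: "orbit G act ` A \<noteq> {}" using x0 Cj_refl A_def by auto
  have neB: "orbit G act ` B \<noteq> {}" using y0 ny B_def by auto
  show False using conn oA oB cov dis neA neB unfolding connected_space_def by blast
qed

end

lemma diag_cact:
  assumes "cact G TG EG aE" "cact G TG X act"
  shows "cact G TG (prod_topology EG X) (diag_action aE act)"
proof -
  interpret E: cact G TG EG aE by fact
  interpret A: cact G TG X act by fact
  have c: "continuous_map (prod_topology TG (prod_topology EG X)) (prod_topology EG X)
            (\<lambda>(g, p). diag_action aE act g p)"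
  proof -
    have c1: "continuous_map (prod_topology TG (prod_topology EG X)) EG (\<lambda>q. aE (fst q) (fst (snd q)))"
      by (rule E.cont_pair[OF continuous_map_fst cm_fst[OF continuous_map_snd]])
    have c2: "continuous_map (prod_topology TG (prod_topology EG X)) X (\<lambda>q. act (fst q) (snd (snd q)))"
      by (rule A.cont_pair[OF continuous_map_fst cm_snd[OF continuous_map_snd]])
    show ?thesis
      by (rule continuous_map_eq[OF continuous_map_pairedI[OF c1 c2]])
         (auto simp: diag_action_def case_prod_unfold)
  qed
  show ?thesis
    unfolding cact_def continuous_action_def
  proof (intro conjI ballI)
    show "topological_group G TG" by (rule E.tg)
    show "continuous_map (prod_topology TG (prod_topology EG X)) (prod_topology EG X) (\<lambda>(g, x). diag_action aE act g x)"
      using c .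
  next
    fix p assume "p \<in> topspace (prod_topology EG X)"
    then show "diag_action aE act \<one>\<^bsub>G\<^esub> p = p"
      by (cases p) (simp add: diag_action_def E.act_one A.act_one)
  next
    fix g h p assume "g \<in> carrier G" "h \<in> carrier G" "p \<in> topspace (prod_topology EG X)"
    then show "diag_action aE act (g \<otimes>\<^bsub>G\<^esub> h) p = diag_action aE act g (diag_action aE act h p)"
      by (cases p) (simp add: diag_action_def E.act_mult A.act_mult)
  qed
qed

locale fbl = slc G TG X act S \<Gamma> U sec + E: cact G TG EG aE
  for G (structure) and TG :: "'g topology" and X :: "'x topology" and act S \<Gamma> U sec
    and EG :: "'e topology" and aE +
  fixes \<Gamma>0 :: "'g set" and k :: 'g
  assumes sub0: "subgroup \<Gamma>0 G"
  and k: "k \<in> carrier G"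
  and conjk: "\<Gamma> = (\<lambda>h. k \<otimes> h \<otimes> inv k) ` \<Gamma>0"
begin

sublocale F: cact "subgrp G \<Gamma>0" "subtopology TG \<Gamma>0" EG aE
  by (rule E.cact_subgroup[OF sub0])

sublocale D: cact G TG "prod_topology EG X" "diag_action aE act"
  by (rule diag_cact) unfold_locales

lemma \<Gamma>0c: "\<Gamma>0 \<subseteq> carrier G" using sub0 by (rule subgroup.subset)

lemma conj_to0: assumes "\<delta> \<in> \<Gamma>" shows "inv k \<otimes> \<delta> \<otimes> k \<in> \<Gamma>0"
proof -
  obtain d where d: "d \<in> \<Gamma>0" "\<delta> = k \<otimes> d \<otimes> inv k" using assms conjk by auto
  have dc: "d \<in> carrier G" using d \<Gamma>0c by auto
  have "inv k \<otimes> \<delta> \<otimes> k = d" using d(2) k dc by (simp add: m_assoc) (simp add: m_assoc[symmetric])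
  then show ?thesis using d by simp
qed

lemma conj_from0: assumes "d \<in> \<Gamma>0" shows "k \<otimes> d \<otimes> inv k \<in> \<Gamma>"
  using assms conjk by auto

definition "qF = orbit (subgrp G \<Gamma>0) aE"
definition "qY = orbit G (diag_action aE act)"
definition "ob = orbit G act"
definition "\<sigma> b = (SOME s. s \<in> S \<and> s \<in> b)"
definition "gS x = (SOME g. g \<in> carrier G \<and> x = act g (\<sigma> (ob x)))"
definition "\<phi>0 p = (ob (\<sigma> (ob (snd p))), qF (aE (inv k \<otimes> inv (gS (snd p))) (fst p)))"
definition "\<phi>Y C = \<phi>0 (SOME p. p \<in> C)"
definition "\<psi>Y bf = qY (aE k (SOME e. e \<in> snd bf), \<sigma> (fst bf))"
definition "UB = ob ` W"

lemma diag_eq: "diag_action aE act h (e, x) = (aE h e, act h x)"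
  by (simp add: diag_action_def)

lemma qF_act: "d \<in> \<Gamma>0 \<Longrightarrow> e \<in> topspace EG \<Longrightarrow> qF (aE d e) = qF e"
  unfolding qF_def using F.orbit_act by simp

lemma qY_act: "h \<in> carrier G \<Longrightarrow> e \<in> topspace EG \<Longrightarrow> x \<in> topspace X \<Longrightarrow> qY (aE h e, act h x) = qY (e, x)"
  unfolding qY_def using D.orbit_act[of h "(e, x)"] by (simp add: diag_eq topspace_prod_topology)

lemma \<sigma>1: assumes g: "g \<in> carrier G" and s: "s \<in> S" and x: "x = act g s" shows "\<sigma> (ob x) = s"
proof -
  have sX: "s \<in> topspace X" using s S by auto
  have "s = act (inv g) x" using x act_inv1 g sX by simp
  then have sin: "s \<in> ob x" unfolding ob_def using x g sX act_in mem_orbit_iff[of x s] by auto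
  have ex: "\<exists>s'. s' \<in> S \<and> s' \<in> ob x" using s sin by blast
  define s' where "s' = (SOME s'. s' \<in> S \<and> s' \<in> ob x)"
  have s': "s' \<in> S" "s' \<in> ob x" using someI_ex[OF ex] unfolding s'_def by auto
  have xX: "x \<in> topspace X" using x g sX act_in by simp
  obtain h where h: "h \<in> carrier G" "s' = act h x" using s'(2) mem_orbit_iff[OF xX] unfolding ob_def by auto
  have "act (h \<otimes> g) s = act \<one> s'" using h x g sX act_mult s' S act_one by auto
  then have "s = s'" using uniq(1)[of "h \<otimes> g" \<one> s s'] h g s s' by simp
  then show ?thesis unfolding \<sigma>_def s'_def by simp
qed

lemma g1: assumes g: "g \<in> carrier G" and s: "s \<in> S" and x: "x = act g s"
  shows "gS x \<in> carrier G" "x = act (gS x) s" "inv (gS x) \<otimes> g \<in> \<Gamma>"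
proof -
  have ex: "\<exists>g'. g' \<in> carrier G \<and> x = act g' (\<sigma> (ob x))" using \<sigma>1[OF assms] g x by auto
  have "gS x \<in> carrier G \<and> x = act (gS x) (\<sigma> (ob x))" unfolding gS_def by (rule someI_ex[OF ex])
  then show gc: "gS x \<in> carrier G" and xe: "x = act (gS x) s" using \<sigma>1[OF assms] by auto
  show "inv (gS x) \<otimes> g \<in> \<Gamma>" using uniq(2)[OF g gc s s] x xe by simp
qed

lemma L: assumes g: "g \<in> carrier G" and s: "s \<in> S" and x: "x = act g s" and e: "e \<in> topspace EG"
  shows "\<phi>0 (e, x) = (ob s, qF (aE (inv k \<otimes> inv g) e))"
proof -
  define g' where "g' = gS x"
  have g': "g' \<in> carrier G" "inv g' \<otimes> g \<in> \<Gamma>" using g1[OF assms(1-3)] unfolding g'_def by auto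
  define \<delta> where "\<delta> = inv g' \<otimes> g"
  have d: "\<delta> \<in> \<Gamma>" using g' \<delta>_def by simp
  have dc: "\<delta> \<in> carrier G" using g' g \<delta>_def by simp
  define d0 where "d0 = inv k \<otimes> \<delta> \<otimes> k"
  have d0: "d0 \<in> \<Gamma>0" using conj_to0[OF d] d0_def by simp
  have "inv k \<otimes> inv g' = d0 \<otimes> (inv k \<otimes> inv g)"
    unfolding d0_def \<delta>_def using g g' k by (simp add: m_assoc) (simp add: m_assoc[symmetric])
  then have "aE (inv k \<otimes> inv g') e = aE d0 (aE (inv k \<otimes> inv g) e)"
    using d0 \<Gamma>0c g k e by (simp add: E.act_mult subsetD)
  then have "qF (aE (inv k \<otimes> inv g') e) = qF (aE (inv k \<otimes> inv g) e)"
    using qF_act[OF d0] E.act_in g k e by simp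
  then show ?thesis unfolding \<phi>0_def using \<sigma>1[OF assms(1-3)] g'_def by simp
qed

lemma mem_qY: assumes e: "e \<in> topspace EG" and x: "x \<in> topspace X"
  shows "p \<in> qY (e, x) \<longleftrightarrow> (\<exists>h\<in>carrier G. p = (aE h e, act h x))"
  unfolding qY_def using D.mem_orbit_iff[of "(e, x)" p] e x by (simp add: diag_eq topspace_prod_topology)

lemma \<phi>Y_eq: assumes e: "e \<in> topspace EG" and x: "x \<in> W" shows "\<phi>Y (qY (e, x)) = \<phi>0 (e, x)"
proof -
  have xX: "x \<in> topspace X" using x W_sub by auto
  obtain g s where gs: "g \<in> carrier G" "s \<in> S" "x = act g s" using x unfolding W_iff by blast
  have ex: "\<exists>p. p \<in> qY (e, x)" using mem_qY[OF e xX] e xX act_one E.act_one by (intro exI[of _ "(e, x)"]) force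
  define p where "p = (SOME p. p \<in> qY (e, x))"
  have "p \<in> qY (e, x)" unfolding p_def by (rule someI_ex[OF ex])
  then obtain h where h: "h \<in> carrier G" "p = (aE h e, act h x)" using mem_qY[OF e xX] by blast
  have hx: "act h x = act (h \<otimes> g) s" using h gs S act_mult by auto
  have hg: "h \<otimes> g \<in> carrier G" using h gs by simp
  have eh: "aE h e \<in> topspace EG" using E.act_in h e by simp
  have "\<phi>0 p = (ob s, qF (aE (inv k \<otimes> inv (h \<otimes> g)) (aE h e)))"
    unfolding h(2) using L[OF hg gs(2) hx eh] .
  also have "aE (inv k \<otimes> inv (h \<otimes> g)) (aE h e) = aE (inv k \<otimes> inv g) e"
  proof -
    have "aE (inv k \<otimes> inv (h \<otimes> g)) (aE h e) = aE (inv k \<otimes> inv (h \<otimes> g) \<otimes> h) e"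
      using E.act_mult h gs k e by simp
    also have "inv k \<otimes> inv (h \<otimes> g) \<otimes> h = inv k \<otimes> inv g"
      using h gs k by (simp add: inv_mult_group m_assoc)
    finally show ?thesis .
  qed
  also have "(ob s, qF (aE (inv k \<otimes> inv g) e)) = \<phi>0 (e, x)" using L[OF gs e] by simp
  finally show ?thesis unfolding \<phi>Y_def p_def .
qed

lemma UB_iff: "b \<in> UB \<longleftrightarrow> (\<exists>s\<in>S. b = ob s)"
proof
  assume "b \<in> UB"
  then obtain x where x: "x \<in> W" "b = ob x" unfolding UB_def by auto
  then obtain g s where gs: "g \<in> carrier G" "s \<in> S" "x = act g s" unfolding W_iff by blast
  then have "ob x = ob s" unfolding ob_def using orbit_act S by auto
  then show "\<exists>s\<in>S. b = ob s" using gs x by auto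
next
  assume "\<exists>s\<in>S. b = ob s"
  then show "b \<in> UB" unfolding UB_def using S_sub_W by auto
qed

lemma Q1: assumes "b \<in> UB" shows "\<sigma> b \<in> S" "b = ob (\<sigma> b)"
proof -
  obtain s where s: "s \<in> S" "b = ob s" using assms UB_iff by auto
  have "\<sigma> b = s" using \<sigma>1[of \<one> s s] s act_one S by auto
  then show "\<sigma> b \<in> S" "b = ob (\<sigma> b)" using s by auto
qed

lemma Q2: assumes b: "b \<in> UB" and e: "e \<in> topspace EG" shows "\<psi>Y (b, qF e) = qY (aE k e, \<sigma> b)"
proof -
  have ex: "\<exists>e'. e' \<in> qF e" using F.in_orbit[OF e] unfolding qF_def by blast
  define e' where "e' = (SOME e'. e' \<in> qF e)"
  have "e' \<in> qF e" unfolding e'_def by (rule someI_ex[OF ex])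
  then obtain d where d: "d \<in> \<Gamma>0" "e' = aE d e" using F.mem_orbit_iff[OF e] unfolding qF_def by auto
  have dc: "d \<in> carrier G" using d \<Gamma>0c by auto
  define \<gamma> where "\<gamma> = k \<otimes> d \<otimes> inv k"
  have ga: "\<gamma> \<in> \<Gamma>" using conj_from0[OF d(1)] \<gamma>_def by simp
  have gc: "\<gamma> \<in> carrier G" using k dc \<gamma>_def by simp
  have "aE k e' = aE (k \<otimes> d) e" using d E.act_mult k dc e by simp
  also have "k \<otimes> d = \<gamma> \<otimes> k" unfolding \<gamma>_def using k dc by (simp add: m_assoc)
  also have "aE (\<gamma> \<otimes> k) e = aE \<gamma> (aE k e)" using E.act_mult gc k e by simp
  finally have ak: "aE k e' = aE \<gamma> (aE k e)" .
  have sb: "\<sigma> b \<in> S" using Q1[OF b] by simp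
  have "act \<gamma> (\<sigma> b) = \<sigma> b" using const[OF ga sb] .
  then have "qY (aE k e', \<sigma> b) = qY (aE \<gamma> (aE k e), act \<gamma> (\<sigma> b))" using ak by simp
  also have "\<dots> = qY (aE k e, \<sigma> b)" using qY_act gc E.act_in k e sb S by auto
  finally show ?thesis unfolding \<psi>Y_def e'_def by simp
qed

lemma cmp: assumes e: "e \<in> topspace EG" and x: "x \<in> topspace X" shows "comparison_map (qY (e, x)) = ob x"
proof -
  have "comparison_map (qY (e, x)) = snd ` {p. \<exists>h\<in>carrier G. p = (aE h e, act h x)}"
  proof -
    have "qY (e, x) = {p. \<exists>h\<in>carrier G. p = (aE h e, act h x)}" using mem_qY[OF e x] by blast
    then show ?thesis unfolding comparison_map_def by simp
  qed
  also have "\<dots> = ob x" unfolding ob_def orbit_def by (auto simp: image_iff) blast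
  finally show ?thesis .
qed

lemma tsY: "topspace (homotopy_quotient G EG aE X act) = qY ` (topspace EG \<times> topspace X)"
  unfolding homotopy_quotient_def qY_def D.topspace_orbit_space by (simp add: topspace_prod_topology)

definition "UY = {C \<in> topspace (homotopy_quotient G EG aE X act). comparison_map C \<in> UB}"

lemma UY_eq: "UY = qY ` (topspace EG \<times> W)"
proof (intro equalityI subsetI)
  fix C assume "C \<in> UY"
  then obtain e x where ex: "e \<in> topspace EG" "x \<in> topspace X" "C = qY (e, x)" "comparison_map C \<in> UB"
    unfolding UY_def tsY by auto
  then have "ob x \<in> ob ` W" using cmp UB_def by simp
  then have "x \<in> W" using W_sat ex(2) unfolding ob_def by blast
  then show "C \<in> qY ` (topspace EG \<times> W)" using ex by auto
next
  fix C assume "C \<in> qY ` (topspace EG \<times> W)"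
  then obtain e x where ex: "e \<in> topspace EG" "x \<in> W" "C = qY (e, x)" by auto
  have xX: "x \<in> topspace X" using ex W_sub by auto
  show "C \<in> UY" unfolding UY_def tsY using ex xX cmp[OF ex(1) xX] UB_def by auto
qed

end

context slc
begin

lemma LOC:
  assumes x1: "x1 \<in> W"
  obtains N cN sN g1 where "openin X N" "x1 \<in> N" "N \<subseteq> W" "g1 \<in> carrier G"
    "continuous_map (subtopology X N) (subtopology (coset_space G TG \<Gamma>) U) cN"
    "continuous_map (subtopology X N) (subtopology X S) sN"
    "\<And>x. x \<in> N \<Longrightarrow> cN x \<in> U \<and> sN x \<in> S \<and> x = act (g1 \<otimes> sec (cN x)) (sN x)"
proof -
  obtain g1 s1 where gs: "g1 \<in> carrier G" "s1 \<in> S" "x1 = act g1 s1" using x1 unfolding W_iff by blast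
  define N where "N = act g1 ` T"
  have No: "openin X N" unfolding N_def using open_act[OF gs(1) T_open] .
  have xN: "x1 \<in> N" unfolding N_def using gs in_T by auto
  have NW: "N \<subseteq> W" unfolding N_def W_union using gs(1) by blast
  let ?PZ = "prod_topology (subtopology (coset_space G TG \<Gamma>) U) (subtopology X S)"
  let ?f = "\<lambda>(c, s). act (sec c) s"
  have fT: "?f ` topspace ?PZ = T" unfolding tsUS T_def ..
  have "homeomorphic_map ?PZ (subtopology X T) ?f" using emb unfolding embedding_map_def fT .
  then obtain e' where he: "homeomorphic_maps ?PZ (subtopology X T) ?f e'" using homeomorphic_map_maps by blast
  have Tsub: "T \<subseteq> topspace X" using T_open by (rule openin_subset)
  have Nsub: "N \<subseteq> topspace X" using No by (rule openin_subset)
  have mT: "act (inv g1) x \<in> T" if "x \<in> N" for x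
  proof -
    have "x \<in> act g1 ` T" using that N_def by simp
    then obtain t where t: "t \<in> T" "x = act g1 t" by blast
    then show ?thesis using act_inv1 gs(1) Tsub by auto
  qed
  have cm: "continuous_map (subtopology X N) (subtopology X T) (act (inv g1))"
    unfolding continuous_map_in_subtopology
  proof
    show "continuous_map (subtopology X N) X (act (inv g1))"
      by (rule continuous_map_from_subtopology, rule cont_act) (use gs in simp)
    show "act (inv g1) \<in> topspace (subtopology X N) \<rightarrow> T" using mT by auto
  qed
  have ce: "continuous_map (subtopology X T) ?PZ e'" using he unfolding homeomorphic_maps_def by blast
  have c: "continuous_map (subtopology X N) ?PZ (\<lambda>x. e' (act (inv g1) x))" by (rule cm_comp[OF cm ce])
  show ?thesis
  proof (rule that[OF No xN NW gs(1) cm_fst[OF c] cm_snd[OF c]])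
    fix x assume x: "x \<in> N"
    define t where "t = act (inv g1) x"
    have t: "t \<in> T" using mT x t_def by simp
    have tX: "t \<in> topspace (subtopology X T)" using t Tsub by auto
    have "e' ` topspace (subtopology X T) \<subseteq> topspace ?PZ" using ce by (rule continuous_map_image_subset_topspace)
    then have et: "e' t \<in> U \<times> S" using tX unfolding tsUS by blast
    have ft: "?f (e' t) = t" using he tX unfolding homeomorphic_maps_def by blast
    obtain c s where cs: "e' t = (c, s)" by fastforce
    have c: "c \<in> U" and s: "s \<in> S" using et cs by auto
    have "x = act g1 t" using t_def act_inv2 gs(1) x Nsub by auto
    also have "t = act (sec c) s" using ft cs by simp
    also have "act g1 (act (sec c) s) = act (g1 \<otimes> sec c) s" using act_mult gs(1) sec_in[OF c] s S by auto
    finally show "fst (e' (act (inv g1) x)) \<in> U \<and> snd (e' (act (inv g1) x)) \<in> S \<and>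
      x = act (g1 \<otimes> sec (fst (e' (act (inv g1) x)))) (snd (e' (act (inv g1) x)))"
      using c s cs t_def by simp
  qed
qed

end

context fbl
begin

abbreviation "BX \<equiv> orbit_space G X act"
abbreviation "Fsp \<equiv> orbit_space (subgrp G \<Gamma>0) EG aE"
abbreviation "Ysp \<equiv> homotopy_quotient G EG aE X act"

lemma BX_q: "BX = quotient_topology X ob" unfolding orbit_space_def ob_def ..
lemma Y_q: "Ysp = quotient_topology (prod_topology EG X) qY"
  unfolding homotopy_quotient_def orbit_space_def qY_def ..

lemma W_openSub: "N \<subseteq> W \<Longrightarrow> openin X N \<Longrightarrow> openin (subtopology X W) N"
  using openin_open_subtopology[OF W_open] by blast

lemma subWN: "N \<subseteq> W \<Longrightarrow> subtopology (subtopology X W) N = subtopology X N"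
  by (simp add: subtopology_subtopology Int_absorb1)

lemma c_sigW: "continuous_map (subtopology X W) (subtopology X S) (\<lambda>x. \<sigma> (ob x))"
proof (rule continuous_map_locally)
  fix x1 assume "x1 \<in> topspace (subtopology X W)"
  then have x1: "x1 \<in> W" by simp
  obtain N cN sN g1 where N: "openin X N" "x1 \<in> N" "N \<subseteq> W" "g1 \<in> carrier G"
    "continuous_map (subtopology X N) (subtopology (coset_space G TG \<Gamma>) U) cN"
    "continuous_map (subtopology X N) (subtopology X S) sN"
    "\<And>x. x \<in> N \<Longrightarrow> cN x \<in> U \<and> sN x \<in> S \<and> x = act (g1 \<otimes> sec (cN x)) (sN x)"
    using LOC[OF x1] by metis
  have "continuous_map (subtopology X N) (subtopology X S) (\<lambda>x. \<sigma> (ob x))"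
  proof (rule continuous_map_eq[OF N(6)])
    fix x assume "x \<in> topspace (subtopology X N)"
    then have x: "x \<in> N" by simp
    have gc: "g1 \<otimes> sec (cN x) \<in> carrier G" using N(4) sec_in N(7)[OF x] by simp
    have "sN x \<in> S" "x = act (g1 \<otimes> sec (cN x)) (sN x)" using N(7)[OF x] by auto
    then show "sN x = \<sigma> (ob x)" using \<sigma>1[OF gc] by metis
  qed
  then show "\<exists>T. openin (subtopology X W) T \<and> x1 \<in> T \<and> continuous_map (subtopology (subtopology X W) T) (subtopology X S) (\<lambda>x. \<sigma> (ob x))"
    using W_openSub[OF N(3,1)] N(2) subWN[OF N(3)] by auto
qed

lemma c_sig: "continuous_map (subtopology BX UB) (subtopology X S) \<sigma>"
  unfolding BX_q UB_def
proof (rule quotient_continuous_on_open[OF W_open])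
  show "\<And>x. x \<in> topspace X \<Longrightarrow> ob x \<in> ob ` W \<Longrightarrow> x \<in> W" using W_sat unfolding ob_def by blast
  show "continuous_map (subtopology X W) (subtopology X S) (\<lambda>x. \<sigma> (ob x))" by (rule c_sigW)
qed

lemma c_ob: "continuous_map X BX ob" unfolding ob_def by (rule cont_orbit)
lemma c_qF: "continuous_map EG Fsp qF" unfolding qF_def by (rule F.cont_orbit)
lemma c_qY: "continuous_map (prod_topology EG X) Ysp qY"
  unfolding qY_def homotopy_quotient_def by (rule D.cont_orbit)

lemma c_phi0: "continuous_map (prod_topology EG (subtopology X W)) (prod_topology (subtopology BX UB) Fsp) \<phi>0"
proof (rule continuous_map_locally)
  fix p1 assume "p1 \<in> topspace (prod_topology EG (subtopology X W))"
  then obtain e1 x1 where p1: "p1 = (e1, x1)" "e1 \<in> topspace EG" "x1 \<in> W"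
    by (auto simp: topspace_prod_topology)
  obtain N cN sN g1 where N: "openin X N" "x1 \<in> N" "N \<subseteq> W" "g1 \<in> carrier G"
    "continuous_map (subtopology X N) (subtopology (coset_space G TG \<Gamma>) U) cN"
    "continuous_map (subtopology X N) (subtopology X S) sN"
    "\<And>x. x \<in> N \<Longrightarrow> cN x \<in> U \<and> sN x \<in> S \<and> x = act (g1 \<otimes> sec (cN x)) (sN x)"
    using LOC[OF p1(3)] by metis
  let ?Z = "prod_topology EG (subtopology X N)"
  have oT: "openin (prod_topology EG (subtopology X W)) (topspace EG \<times> N)"
    using W_openSub[OF N(3,1)] by (simp add: openin_prod_Times_iff)
  have sZ: "subtopology (prod_topology EG (subtopology X W)) (topspace EG \<times> N) = ?Z"
    by (simp add: subtopology_Times subWN[OF N(3)])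
  have a1: "continuous_map ?Z X (\<lambda>p. sN (snd p))"
    by (rule continuous_map_into_fulltopology, rule cm_comp[OF continuous_map_snd N(6)])
  have b1: "continuous_map ?Z (subtopology BX UB) (\<lambda>p. ob (sN (snd p)))"
    unfolding continuous_map_in_subtopology
  proof
    show "continuous_map ?Z BX (\<lambda>p. ob (sN (snd p)))" by (rule cm_comp[OF a1 c_ob])
    show "(\<lambda>p. ob (sN (snd p))) \<in> topspace ?Z \<rightarrow> UB"
    proof
      fix p assume "p \<in> topspace ?Z"
      then have "snd p \<in> N" by (auto simp: topspace_prod_topology)
      then have "sN (snd p) \<in> W" using N(7) S_sub_W by blast
      then show "ob (sN (snd p)) \<in> UB" unfolding UB_def by blast
    qed
  qed
  have a2: "continuous_map ?Z TG (\<lambda>p. sec (cN (snd p)))"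
    by (rule cm_comp[OF cm_comp[OF continuous_map_snd N(5)] csec])
  have a3: "continuous_map ?Z TG (\<lambda>p. inv k \<otimes> inv (g1 \<otimes> sec (cN (snd p))))"
  proof -
    have cg: "continuous_map ?Z TG (\<lambda>p. g1)" using N(4) top_G by simp
    have ck: "continuous_map ?Z TG (\<lambda>p. inv k)" using k top_G by simp
    show ?thesis by (rule cont_mult_pair[OF ck cont_inv_of[OF cont_mult_pair[OF cg a2]]])
  qed
  have b2: "continuous_map ?Z Fsp (\<lambda>p. qF (aE (inv k \<otimes> inv (g1 \<otimes> sec (cN (snd p)))) (fst p)))"
    by (rule cm_comp[OF E.cont_pair[OF a3 continuous_map_fst] c_qF])
  have "continuous_map ?Z (prod_topology (subtopology BX UB) Fsp) \<phi>0"
  proof (rule continuous_map_eq[OF continuous_map_pairedI[OF b1 b2]])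
    fix p assume "p \<in> topspace ?Z"
    then obtain e x where p: "p = (e, x)" "e \<in> topspace EG" "x \<in> N" by (auto simp: topspace_prod_topology)
    have gc: "g1 \<otimes> sec (cN x) \<in> carrier G" using N(4) sec_in N(7)[OF p(3)] by simp
    show "(ob (sN (snd p)), qF (aE (inv k \<otimes> inv (g1 \<otimes> sec (cN (snd p)))) (fst p))) = \<phi>0 p"
      using L[OF gc _ _ p(2), of "sN x" x] N(7)[OF p(3)] p(1) by simp
  qed
  then show "\<exists>T. openin (prod_topology EG (subtopology X W)) T \<and> p1 \<in> T \<and>
      continuous_map (subtopology (prod_topology EG (subtopology X W)) T) (prod_topology (subtopology BX UB) Fsp) \<phi>0"
    using oT sZ p1 N(2) by (intro exI[of _ "topspace EG \<times> N"]) auto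
qed

lemma OY_open: "openin (prod_topology EG X) (topspace EG \<times> W)"
  using W_open by (simp add: openin_prod_Times_iff)

lemma OY_sat: assumes p: "p \<in> topspace (prod_topology EG X)" and q: "qY p \<in> qY ` (topspace EG \<times> W)"
  shows "p \<in> topspace EG \<times> W"
proof -
  obtain e x where ex: "p = (e, x)" "e \<in> topspace EG" "x \<in> topspace X" using p by (auto simp: topspace_prod_topology)
  obtain e' x' where ex': "e' \<in> topspace EG" "x' \<in> W" "qY (e, x) = qY (e', x')" using q ex by auto
  have x'X: "x' \<in> topspace X" using ex' W_sub by auto
  have "orbit G (diag_action aE act) (e', x') = orbit G (diag_action aE act) (e, x)"
    using ex' unfolding qY_def by simp
  then obtain h where h: "h \<in> carrier G" "(e, x) = diag_action aE act h (e', x')"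
    using D.orbit_eq_iff[of "(e', x')" "(e, x)"] ex ex'(1) x'X by (auto simp: topspace_prod_topology)
  then have "x = act h x'" by (simp add: diag_eq)
  then show ?thesis using W_act[OF ex'(2) h(1)] ex by simp
qed

lemma UY_sub: "UY \<subseteq> topspace Ysp" unfolding UY_def by auto

lemma UB_sub: "UB \<subseteq> topspace BX" unfolding UB_def topspace_orbit_space ob_def using W_sub by auto

lemma c_phiY: "continuous_map (subtopology Ysp UY) (prod_topology (subtopology BX UB) Fsp) \<phi>Y"
  unfolding UY_eq Y_q
proof (rule quotient_continuous_on_open[OF OY_open])
  show "\<And>x. x \<in> topspace (prod_topology EG X) \<Longrightarrow> qY x \<in> qY ` (topspace EG \<times> W) \<Longrightarrow> x \<in> topspace EG \<times> W"
    by (rule OY_sat)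
  have eq: "subtopology (prod_topology EG X) (topspace EG \<times> W) = prod_topology EG (subtopology X W)"
    by (simp add: subtopology_Times)
  show "continuous_map (subtopology (prod_topology EG X) (topspace EG \<times> W)) (prod_topology (subtopology BX UB) Fsp) (\<lambda>x. \<phi>Y (qY x))"
    unfolding eq
    by (rule continuous_map_eq[OF c_phi0]) (auto simp: topspace_prod_topology \<phi>Y_eq)
qed

lemma c_psiY: "continuous_map (prod_topology (subtopology BX UB) Fsp) (subtopology Ysp UY) \<psi>Y"
proof (rule continuous_map_prod_quotient)
  show "open_map EG Fsp qF" unfolding qF_def by (rule F.open_map_orbit)
  show "qF ` topspace EG = topspace Fsp" unfolding qF_def F.topspace_orbit_space ..
  let ?Z = "prod_topology (subtopology BX UB) EG"
  have a1: "continuous_map ?Z X (\<lambda>p. \<sigma> (fst p))"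
    by (rule continuous_map_into_fulltopology, rule cm_comp[OF continuous_map_fst c_sig])
  have a2: "continuous_map ?Z EG (\<lambda>p. aE k (snd p))"
    by (rule cm_comp[OF continuous_map_snd E.cont_act[OF k]])
  have a3: "continuous_map ?Z Ysp (\<lambda>p. qY (aE k (snd p), \<sigma> (fst p)))"
    by (rule cm_comp[OF continuous_map_pairedI[OF a2 a1] c_qY])
  have a4: "continuous_map ?Z (subtopology Ysp UY) (\<lambda>p. qY (aE k (snd p), \<sigma> (fst p)))"
    unfolding continuous_map_in_subtopology
  proof
    show "continuous_map ?Z Ysp (\<lambda>p. qY (aE k (snd p), \<sigma> (fst p)))" by (rule a3)
    show "(\<lambda>p. qY (aE k (snd p), \<sigma> (fst p))) \<in> topspace ?Z \<rightarrow> UY"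
    proof
      fix p assume "p \<in> topspace ?Z"
      then have p: "fst p \<in> UB" "snd p \<in> topspace EG" by (auto simp: topspace_prod_topology)
      then have "aE k (snd p) \<in> topspace EG" "\<sigma> (fst p) \<in> W" using E.act_in k Q1 S_sub_W by auto
      then show "qY (aE k (snd p), \<sigma> (fst p)) \<in> UY" unfolding UY_eq by auto
    qed
  qed
  show "continuous_map ?Z (subtopology Ysp UY) (\<lambda>(z, x). \<psi>Y (z, qF x))"
    by (rule continuous_map_eq[OF a4]) (auto simp: topspace_prod_topology Q2)
qed

lemma J1: assumes C: "C \<in> UY" shows "\<psi>Y (\<phi>Y C) = C" "fst (\<phi>Y C) = comparison_map C"
proof -
  obtain e x where ex: "e \<in> topspace EG" "x \<in> W" "C = qY (e, x)" using C UY_eq by auto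
  obtain g s where gs: "g \<in> carrier G" "s \<in> S" "x = act g s" using ex(2) unfolding W_iff by blast
  have sX: "s \<in> topspace X" and xX: "x \<in> topspace X" using gs S ex W_sub by auto
  have ph: "\<phi>Y C = (ob s, qF (aE (inv k \<otimes> inv g) e))" using \<phi>Y_eq[OF ex(1,2)] L[OF gs ex(1)] ex(3) by simp
  have obs: "ob s \<in> UB" using UB_iff gs by auto
  have e2: "aE (inv k \<otimes> inv g) e \<in> topspace EG" using E.act_in gs k ex by simp
  have ss: "\<sigma> (ob s) = s" using \<sigma>1[of \<one> s s] gs act_one sX by simp
  have "\<psi>Y (\<phi>Y C) = qY (aE k (aE (inv k \<otimes> inv g) e), s)" using Q2[OF obs e2] ph ss by simp
  also have "aE k (aE (inv k \<otimes> inv g) e) = aE (inv g) e"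
    using E.act_mult[of k "inv k \<otimes> inv g" e] gs k ex by (simp add: m_assoc[symmetric])
  also have "s = act (inv g) x" using gs act_inv1 sX by simp
  also have "qY (aE (inv g) e, act (inv g) x) = qY (e, x)" using qY_act gs ex xX by simp
  finally show "\<psi>Y (\<phi>Y C) = C" using ex by simp
  have "comparison_map C = ob x" using cmp[OF ex(1) xX] ex by simp
  also have "ob x = ob s" unfolding ob_def using orbit_act gs sX by simp
  finally show "fst (\<phi>Y C) = comparison_map C" using ph by simp
qed

lemma J2: assumes b: "b \<in> UB" and f: "f \<in> topspace Fsp" shows "\<phi>Y (\<psi>Y (b, f)) = (b, f)"
proof -
  obtain e where e: "e \<in> topspace EG" "f = qF e" using f unfolding F.topspace_orbit_space qF_def by auto
  have sb: "\<sigma> b \<in> S" "b = ob (\<sigma> b)" using Q1[OF b] by auto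
  have ek: "aE k e \<in> topspace EG" using E.act_in k e by simp
  have sbX: "\<sigma> b \<in> topspace X" using sb S by auto
  have "\<psi>Y (b, f) = qY (aE k e, \<sigma> b)" using Q2[OF b e(1)] e by simp
  then have "\<phi>Y (\<psi>Y (b, f)) = \<phi>0 (aE k e, \<sigma> b)" using \<phi>Y_eq ek sb S_sub_W by auto
  also have "\<dots> = (ob (\<sigma> b), qF (aE (inv k \<otimes> inv \<one>) (aE k e)))"
    using L[of \<one> "\<sigma> b" "\<sigma> b" "aE k e"] sb act_one sbX ek by simp
  also have "aE (inv k \<otimes> inv \<one>) (aE k e) = e" using E.act_inv1 k e by simp
  finally show ?thesis using sb e by simp
qed

lemma fb_local:
  "openin BX UB \<and>
   homeomorphic_map (subtopology Ysp {y \<in> topspace Ysp. comparison_map y \<in> UB}) (prod_topology (subtopology BX UB) Fsp) \<phi>Y \<and>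
   (\<forall>y\<in>topspace Ysp. comparison_map y \<in> UB \<longrightarrow> fst (\<phi>Y y) = comparison_map y)"
proof (intro conjI)
  show "openin BX UB" unfolding UB_def ob_def by (rule open_orbit_image[OF W_open])
  have tsP: "topspace (prod_topology (subtopology BX UB) Fsp) = UB \<times> topspace Fsp"
    using UB_sub by (auto simp: topspace_prod_topology)
  have tsU: "topspace (subtopology Ysp UY) = UY" using UY_sub by auto
  have "homeomorphic_maps (subtopology Ysp UY) (prod_topology (subtopology BX UB) Fsp) \<phi>Y \<psi>Y"
    unfolding homeomorphic_maps_def tsP tsU using c_phiY c_psiY J1(1) J2 by auto
  then show "homeomorphic_map (subtopology Ysp {y \<in> topspace Ysp. comparison_map y \<in> UB}) (prod_topology (subtopology BX UB) Fsp) \<phi>Y"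
    unfolding UY_def[symmetric] by (rule homeomorphic_maps_imp_map)
  show "\<forall>y\<in>topspace Ysp. comparison_map y \<in> UB \<longrightarrow> fst (\<phi>Y y) = comparison_map y"
    using J1(2) unfolding UY_def by blast
qed

end

lemma cmp_gen: "comparison_map (orbit G (diag_action aE act) (e, x)) = orbit G act x"
  unfolding comparison_map_def orbit_def diag_action_def by (auto simp: image_iff)

theorem theorem3p4:
  fixes G :: "'g monoid" and TG :: "'g topology"
    and X :: "'x topology" and act :: "'g \<Rightarrow> 'x \<Rightarrow> 'x"
  assumes action: "continuous_action G TG X act"
    and conn: "connected_space (orbit_space G X act)"
    and slices: "\<forall>x\<in>topspace X. \<exists>S. x \<in> S \<and> constant_slice G TG X act S (Stab G act x)"
  shows "(\<forall>x\<in>topspace X. \<forall>y\<in>topspace X. \<exists>g\<in>carrier G.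
            Stab G act y = (\<lambda>h. g \<otimes>\<^bsub>G\<^esub> h \<otimes>\<^bsub>G\<^esub> inv\<^bsub>G\<^esub> g) ` Stab G act x)
       \<and> (\<forall>(EG :: 'e topology) aE. universal_bundle G TG EG aE \<longrightarrow>
            (\<forall>x\<in>topspace X. \<exists>F :: 'e set topology.
               classifying_space_model G TG (Stab G act x) F \<and>
               fibre_bundle (homotopy_quotient G EG aE X act) (orbit_space G X act)
                            comparison_map F))"
proof -
  interpret A: cact G TG X act using action by (simp add: cact_def)
  have P1: "\<forall>x\<in>topspace X. \<forall>y\<in>topspace X. \<exists>g\<in>carrier G.
            Stab G act y = (\<lambda>h. g \<otimes>\<^bsub>G\<^esub> h \<otimes>\<^bsub>G\<^esub> inv\<^bsub>G\<^esub> g) ` Stab G act x"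
    using A.conj_all[OF conn slices] unfolding A.Cj_def by blast
  have P2: "\<exists>F :: 'e set topology.
               classifying_space_model G TG (Stab G act x0) F \<and>
               fibre_bundle (homotopy_quotient G EG aE X act) (orbit_space G X act)
                            comparison_map F"
    if U: "universal_bundle G TG EG aE" and x0: "x0 \<in> topspace X" for EG :: "'e topology" and aE x0
  proof -
    have ne: "topspace EG \<noteq> {}"
      and pbG: "principal_bundle G TG EG aE (orbit_space G EG aE) (orbit G aE)"
      using U unfolding universal_bundle_def by auto
    have caE: "continuous_action G TG EG aE" using pbG unfolding principal_bundle_def by blast
    interpret E: cact G TG EG aE using caE by (simp add: cact_def)
    interpret D: cact G TG "prod_topology EG X" "diag_action aE act"
      by (rule diag_cact) unfold_locales
    define \<Gamma>0 where "\<Gamma>0 = Stab G act x0"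
    have sub0: "subgroup \<Gamma>0 G" unfolding \<Gamma>0_def using A.Stab_subgroup[OF x0] .
    obtain S0 where S0: "x0 \<in> S0" "constant_slice G TG X act S0 \<Gamma>0" using slices x0 \<Gamma>0_def by blast
    have pbS: "principal_bundle (subgrp G \<Gamma>0) (subtopology TG \<Gamma>0) TG (\<lambda>h g. g \<otimes>\<^bsub>G\<^esub> inv\<^bsub>G\<^esub> h)
        (coset_space G TG \<Gamma>0) (\<lambda>g. g <#\<^bsub>G\<^esub> \<Gamma>0)"
      using S0(2) unfolding constant_slice_def slice_def by (elim conjE) assumption
    define F where "F = orbit_space (subgrp G \<Gamma>0) EG aE"
    have csm: "classifying_space_model G TG \<Gamma>0 F"
      unfolding classifying_space_model_def F_def
      using universal_restrict[OF U sub0 pbS] by blast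
    let ?Y = "homotopy_quotient G EG aE X act"
    let ?qY = "orbit G (diag_action aE act)"
    have Yq: "?Y = quotient_topology (prod_topology EG X) ?qY"
      unfolding homotopy_quotient_def orbit_space_def ..
    have tsY: "topspace ?Y = ?qY ` (topspace EG \<times> topspace X)"
      unfolding homotopy_quotient_def D.topspace_orbit_space by (simp add: topspace_prod_topology)
    have ccmp: "continuous_map ?Y (orbit_space G X act) comparison_map"
    proof -
      have "continuous_map (subtopology ?Y (?qY ` topspace (prod_topology EG X))) (orbit_space G X act) comparison_map"
        unfolding Yq
      proof (rule quotient_continuous_on_open[OF openin_topspace])
        show "\<And>x. x \<in> topspace (prod_topology EG X) \<Longrightarrow> ?qY x \<in> ?qY ` topspace (prod_topology EG X) \<Longrightarrow> x \<in> topspace (prod_topology EG X)"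
          by simp
        have "continuous_map (prod_topology EG X) (orbit_space G X act) (\<lambda>p. orbit G act (snd p))"
          by (rule cm_comp[OF continuous_map_snd A.cont_orbit])
        then have "continuous_map (prod_topology EG X) (orbit_space G X act) (\<lambda>x. comparison_map (?qY x))"
          by (rule continuous_map_eq) (metis cmp_gen prod.collapse)
        then show "continuous_map (subtopology (prod_topology EG X) (topspace (prod_topology EG X))) (orbit_space G X act)
             (\<lambda>x. comparison_map (?qY x))"
          by (simp only: subtopology_topspace)
      qed
      moreover have "?qY ` topspace (prod_topology EG X) = topspace ?Y"
        using tsY by (simp add: topspace_prod_topology)
      ultimately show ?thesis by simp
    qed
    have surj: "comparison_map ` topspace ?Y = topspace (orbit_space G X act)"
    proof -
      obtain e0 where e0: "e0 \<in> topspace EG" using ne by blast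
      have "comparison_map ` topspace ?Y = (\<lambda>p. orbit G act (snd p)) ` (topspace EG \<times> topspace X)"
        unfolding tsY image_image by (rule image_cong[OF refl]) (metis cmp_gen prod.collapse)
      also have "\<dots> = orbit G act ` topspace X" using e0 by (auto simp: image_iff)
      finally show ?thesis by (simp add: A.topspace_orbit_space)
    qed
    have loc: "\<exists>U \<phi>. openin (orbit_space G X act) U \<and> b \<in> U \<and>
        homeomorphic_map (subtopology ?Y {y \<in> topspace ?Y. comparison_map y \<in> U})
                         (prod_topology (subtopology (orbit_space G X act) U) F) \<phi> \<and>
        (\<forall>y\<in>topspace ?Y. comparison_map y \<in> U \<longrightarrow> fst (\<phi> y) = comparison_map y)"
      if b: "b \<in> topspace (orbit_space G X act)" for b
    proof -
      obtain y where y: "y \<in> topspace X" "b = orbit G act y" using b unfolding A.topspace_orbit_space by auto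
      obtain S where S: "y \<in> S" "constant_slice G TG X act S (Stab G act y)" using slices y by blast
      obtain U sec where sl: "slc G TG X act S (Stab G act y) U sec" using A.slc_of[OF S(2)] by blast
      obtain k where k: "k \<in> carrier G" "Stab G act y = (\<lambda>h. k \<otimes>\<^bsub>G\<^esub> h \<otimes>\<^bsub>G\<^esub> inv\<^bsub>G\<^esub> k) ` \<Gamma>0"
        using P1 x0 y unfolding \<Gamma>0_def by blast
      have FB: "fbl G TG X act S (Stab G act y) U sec EG aE \<Gamma>0 k"
        unfolding fbl_def fbl_axioms_def using sl caE sub0 k by (simp add: cact_def)
      interpret fb: fbl G TG X act S "Stab G act y" U sec EG aE \<Gamma>0 k by (rule FB)
      have bU: "b \<in> fb.UB" unfolding fb.UB_def fb.ob_def using y S(1) fb.S_sub_W by auto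
      show ?thesis
        using fb.fb_local bU unfolding F_def by blast
    qed
    have "fibre_bundle ?Y (orbit_space G X act) comparison_map F"
      unfolding fibre_bundle_def using ccmp surj loc by blast
    then show ?thesis using csm unfolding \<Gamma>0_def by blast
  qed
  show ?thesis using P1 P2 by blast
qed

end
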